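(* Let $\mathcal U=(V,\tilde V,W,\tilde W,R)$ be a preordered gradient space, let $\mathcal K_0\subseteq\mathrm{Sob}(\mathcal U)$ be a convex Poincaré set which is closed with respect to the norm of $V$, let $f\in\mathrm{Sob}(\mathcal U)$ and $\psi\in\tilde V$, and set $\mathcal K_{\psi,f}=\{u\in\mathrm{Sob}(\mathcal U):u-f\in\mathcal K_0\text{ and }u\ge\psi\}$. If $\mathcal K_{\psi,f}\ne\emptyset$, then there exists $u\in\mathcal K_{\psi,f}$ with $\|g_u\|_W=\inf_{v\in\mathcal K_{\psi,f}}\|g_v\|_W$. If $u_1,u_2$ are two such minimizers, then $g_{u_1}=g_{u_2}$. Moreover, if in addition $\mathcal K_0$ is a linear subspace of $\mathrm{Sob}(\mathcal U)$ and the map $u\mapsto g_u$ is linear on $\mathrm{Sob}(\mathcal U)$, then $u_1=u_2$.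
   Context: Let $\tilde V,\tilde W$ be vector spaces over $\mathbf R$ or $\mathbf C$. A gradient relation is a set $R\subseteq\tilde V\times\tilde W$ such that (G1) if $(u,g)\in R$ and $(u',g')\in R$ then $(u+u',g+g')\in R$; (G2) if $(u,g)\in R$ and $\alpha>0$ then $(\alpha u,\alpha g)\in R$. A gradient space $\mathcal U=(V,\tilde V,W,\tilde W,R)$ consists of vector spaces $\tilde V,\tilde W$, a gradient relation $R\subseteq\tilde V\times\tilde W$, and linear subspaces $V\subseteq\tilde V$, $W\subseteq\tilde W$ such that: (GS1) $V$ is a reflexive Banach space with norm $\|\cdot\|_V$; (GS2) $W$ is a reflexive and strictly convex Banach space with norm $\|\cdot\|_W$; (GS3) if $(u,g)\in R$ with $u\in V$, $g\in W$, then there exists $g'\in W$ with $(-u,g')\in R$; (GS4) if $u,u_i\in V$ and $g,g_i\in W$ with $(u_i,g_i)\in R$ for $i=1,2,\dots$, $\|u-u_i\|_V\to0$ and $\|g-g_i\|_W\to0$, then $(u,g)\in R$. The Sobolev space of $\mathcal U$ is $\mathrm{Sob}(\mathcal U)=\{u\in V:(u,g)\in R\text{ for some }g\in W\}$. Each $u\in\mathrm{Sob}(\mathcal U)$ has a unique minimal gradient $g_u\in W$: $(u,g_u)\in R$ and $\|g_u\|_W\le\|g\|_W$ for all $g\in W$ with $(u,g)\in R$. A Poincaré set is a subset $A\subseteq\mathrm{Sob}(\mathcal U)$ for which there is $C>0$ such that $\|u\|_V\le C\|g\|_W$ for all $u\in A$ and all $g\in W$ with $(u,g)\in R$. A linear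 preorder on $\tilde V$ is a relation $\le$ with: $a\le a$; $a\le b,\ b\le c\Rightarrow a\le c$; $b\le c\Rightarrow a+b\le a+c$; $a\le b,\ \alpha\in[0,\infty)\Rightarrow\alpha a\le\alpha b$ ($b\ge a$ means $a\le b$). A preordered gradient space is a gradient space together with a linear preorder $\le$ on $\tilde V$ such that if $u_i\in V$, $\psi\in\tilde V$, $u_i\le\psi$ for all $i$ and $u_i\to u$ in $V$, then $u\le\psi$. *)

theory Defs
  imports "HOL-Analysis.Analysis"
begin

text \<open>The ambient spaces \<open>V~\<close>, \<open>W~\<close> are the types 'v, 'w (real vector spaces;
  complex spaces are covered via their underlying real structure).
  \<open>V \<subseteq> V~\<close> is a linear subspace carrying its own norm \<open>nV\<close>.\<close>

definition normed_subspace :: "'v::real_vector set \<Rightarrow> ('v \<Rightarrow> real) \<Rightarrow> bool" where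
  "normed_subspace V n \<longleftrightarrow> subspace V \<and>
     (\<forall>x\<in>V. n x \<ge> 0) \<and> (\<forall>x\<in>V. n x = 0 \<longleftrightarrow> x = 0) \<and>
     (\<forall>x\<in>V. \<forall>y\<in>V. n (x + y) \<le> n x + n y) \<and>
     (\<forall>c. \<forall>x\<in>V. n (c *\<^sub>R x) = \<bar>c\<bar> * n x)"

definition banach_subspace :: "'v::real_vector set \<Rightarrow> ('v \<Rightarrow> real) \<Rightarrow> bool" where
  "banach_subspace V n \<longleftrightarrow> normed_subspace V n \<and>
     (\<forall>s. (\<forall>i. s i \<in> V) \<and>
          (\<forall>e>0. \<exists>N. \<forall>m\<ge>N. \<forall>k\<ge>N. n (s m - s k) < e)
          \<longrightarrow> (\<exists>x\<in>V. (\<lambda>i. n (s i - x)) \<longlonglongrightarrow> 0))"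

text \<open>Continuous (real-)linear functionals on \<open>(V, n)\<close>, represented as functions vanishing off V.\<close>
definition dual_space :: "'v::real_vector set \<Rightarrow> ('v \<Rightarrow> real) \<Rightarrow> ('v \<Rightarrow> real) set" where
  "dual_space V n = {\<phi>. (\<forall>x. x \<notin> V \<longrightarrow> \<phi> x = 0) \<and>
     (\<forall>x\<in>V. \<forall>y\<in>V. \<phi> (x + y) = \<phi> x + \<phi> y) \<and>
     (\<forall>c. \<forall>x\<in>V. \<phi> (c *\<^sub>R x) = c * \<phi> x) \<and>
     (\<exists>C. \<forall>x\<in>V. \<bar>\<phi> x\<bar> \<le> C * n x)}"

definition dual_norm :: "'v::real_vector set \<Rightarrow> ('v \<Rightarrow> real) \<Rightarrow> ('v \<Rightarrow> real) \<Rightarrow> real" where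
  "dual_norm V n \<phi> = Sup {\<bar>\<phi> x\<bar> | x. x \<in> V \<and> n x \<le> 1}"

definition reflexive_banach :: "'v::real_vector set \<Rightarrow> ('v \<Rightarrow> real) \<Rightarrow> bool" where
  "reflexive_banach V n \<longleftrightarrow> banach_subspace V n \<and>
     (\<forall>\<Phi> :: ('v \<Rightarrow> real) \<Rightarrow> real.
        (\<forall>\<phi>\<in>dual_space V n. \<forall>\<psi>\<in>dual_space V n. \<Phi> (\<lambda>x. \<phi> x + \<psi> x) = \<Phi> \<phi> + \<Phi> \<psi>) \<and>
        (\<forall>c. \<forall>\<phi>\<in>dual_space V n. \<Phi> (\<lambda>x. c * \<phi> x) = c * \<Phi> \<phi>) \<and>
        (\<exists>C. \<forall>\<phi>\<in>dual_space V n. \<bar>\<Phi> \<phi>\<bar> \<le> C * dual_norm V n \<phi>)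
        \<longrightarrow> (\<exists>x\<in>V. \<forall>\<phi>\<in>dual_space V n. \<Phi> \<phi> = \<phi> x))"

definition strictly_convex_norm :: "'v::real_vector set \<Rightarrow> ('v \<Rightarrow> real) \<Rightarrow> bool" where
  "strictly_convex_norm V n \<longleftrightarrow>
     (\<forall>x\<in>V. \<forall>y\<in>V. n x = 1 \<and> n y = 1 \<and> x \<noteq> y \<longrightarrow> n ((1/2) *\<^sub>R (x + y)) < 1)"

definition gradient_relation :: "('v::real_vector \<times> 'w::real_vector) set \<Rightarrow> bool" where
  "gradient_relation R \<longleftrightarrow>
     (\<forall>u g u' g'. (u, g) \<in> R \<and> (u', g') \<in> R \<longrightarrow> (u + u', g + g') \<in> R) \<and>
     (\<forall>u g \<alpha>. (u, g) \<in> R \<and> \<alpha> > 0 \<longrightarrow> (\<alpha> *\<^sub>R u, \<alpha> *\<^sub>R g) \<in> R)"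

definition gradient_space ::
  "'v::real_vector set \<Rightarrow> ('v \<Rightarrow> real) \<Rightarrow> 'w::real_vector set \<Rightarrow> ('w \<Rightarrow> real)
     \<Rightarrow> ('v \<times> 'w) set \<Rightarrow> bool" where
  "gradient_space V nV W nW R \<longleftrightarrow> gradient_relation R \<and>
     reflexive_banach V nV \<and>
     reflexive_banach W nW \<and> strictly_convex_norm W nW \<and>
     (\<forall>u\<in>V. \<forall>g\<in>W. (u, g) \<in> R \<longrightarrow> (\<exists>g'\<in>W. (- u, g') \<in> R)) \<and>
     (\<forall>u\<in>V. \<forall>g\<in>W. \<forall>us gs. (\<forall>i. us i \<in> V \<and> gs i \<in> W \<and> (us i, gs i) \<in> R) \<and>
        (\<lambda>i. nV (u - us i)) \<longlonglongrightarrow> 0 \<and> (\<lambda>i. nW (g - gs i)) \<longlonglongrightarrow> 0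
        \<longrightarrow> (u, g) \<in> R)"

definition linear_preorder :: "('v::real_vector \<Rightarrow> 'v \<Rightarrow> bool) \<Rightarrow> bool" where
  "linear_preorder le \<longleftrightarrow> (\<forall>a. le a a) \<and> (\<forall>a b c. le a b \<and> le b c \<longrightarrow> le a c) \<and>
     (\<forall>a b c. le b c \<longrightarrow> le (a + b) (a + c)) \<and>
     (\<forall>a b \<alpha>. le a b \<and> \<alpha> \<ge> 0 \<longrightarrow> le (\<alpha> *\<^sub>R a) (\<alpha> *\<^sub>R b))"

definition preordered_gradient_space ::
  "'v::real_vector set \<Rightarrow> ('v \<Rightarrow> real) \<Rightarrow> 'w::real_vector set \<Rightarrow> ('w \<Rightarrow> real)
     \<Rightarrow> ('v \<times> 'w) set \<Rightarrow> ('v \<Rightarrow> 'v \<Rightarrow> bool) \<Rightarrow> bool" where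
  "preordered_gradient_space V nV W nW R le \<longleftrightarrow> gradient_space V nV W nW R \<and>
     linear_preorder le \<and>
     (\<forall>us u \<psi>. (\<forall>i. us i \<in> V \<and> le (us i) \<psi>) \<and> u \<in> V \<and> (\<lambda>i. nV (us i - u)) \<longlonglongrightarrow> 0
        \<longrightarrow> le u \<psi>)"

definition Sob :: "'v set \<Rightarrow> 'w set \<Rightarrow> ('v \<times> 'w) set \<Rightarrow> 'v set" where
  "Sob V W R = {u \<in> V. \<exists>g\<in>W. (u, g) \<in> R}"

text \<open>The minimal gradient (its existence and uniqueness is a known fact about gradient spaces).\<close>
definition min_grad :: "'w set \<Rightarrow> ('w \<Rightarrow> real) \<Rightarrow> ('v \<times> 'w) set \<Rightarrow> 'v \<Rightarrow> 'w" where
  "min_grad W nW R u = (THE g. g \<in> W \<and> (u, g) \<in> R \<and> (\<forall>g'\<in>W. (u, g') \<in> R \<longrightarrow> nW g \<le> nW g'))"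

definition poincare_set ::
  "'v set \<Rightarrow> ('v \<Rightarrow> real) \<Rightarrow> 'w set \<Rightarrow> ('w \<Rightarrow> real) \<Rightarrow> ('v \<times> 'w) set \<Rightarrow> 'v set \<Rightarrow> bool" where
  "poincare_set V nV W nW R A \<longleftrightarrow> A \<subseteq> Sob V W R \<and>
     (\<exists>C>0. \<forall>u\<in>A. \<forall>g\<in>W. (u, g) \<in> R \<longrightarrow> nV u \<le> C * nW g)"

end

theory Submission
  imports Defs "HOL-Library.Function_Algebras"
begin


definition sublin :: "'a::real_vector set \<Rightarrow> ('a \<Rightarrow> real) \<Rightarrow> bool" where
 "sublin S p \<longleftrightarrow> (\<forall>x\<in>S. \<forall>y\<in>S. p (x+y) \<le> p x + p y) \<and> (\<forall>x\<in>S. \<forall>c>0. p (c *\<^sub>R x) \<le> c * p x)"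

definition goodG :: "'a::real_vector set \<Rightarrow> ('a \<Rightarrow> real) \<Rightarrow> ('a \<times> real) set \<Rightarrow> bool" where
 "goodG S p G \<longleftrightarrow> (0,0) \<in> G \<and> (\<forall>x y y'. (x,y)\<in>G \<longrightarrow> (x,y')\<in>G \<longrightarrow> y = y') \<and>
   (\<forall>x y x' y'. (x,y)\<in>G \<longrightarrow> (x',y')\<in>G \<longrightarrow> (x+x', y+y')\<in>G) \<and>
   (\<forall>x y c. (x,y)\<in>G \<longrightarrow> (c *\<^sub>R x, c*y)\<in>G) \<and> (\<forall>x y. (x,y)\<in>G \<longrightarrow> x\<in>S \<and> y \<le> p x)"

lemma sublin_eq:
  assumes "sublin S p" "subspace S" "x \<in> S" "c > 0"
  shows "p (c *\<^sub>R x) = c * p x"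
proof -
  have a: "p (c *\<^sub>R x) \<le> c * p x" using assms unfolding sublin_def by auto
  have "c *\<^sub>R x \<in> S" using assms by (simp add: subspace_scale)
  then have "p ((1/c) *\<^sub>R (c *\<^sub>R x)) \<le> (1/c) * p (c *\<^sub>R x)" using assms unfolding sublin_def
    by (meson divide_pos_pos zero_less_one)
  then have "p x \<le> (1/c) * p (c *\<^sub>R x)" using assms by simp
  then have "c * p x \<le> p (c *\<^sub>R x)" using assms by (simp add: field_simps)
  with a show ?thesis by simp
qed

lemma sublin_0: assumes "sublin S p" "subspace S" shows "0 \<le> p 0"
proof -
  have "p (0+0) \<le> p 0 + p 0" using assms unfolding sublin_def by (meson subspace_0)
  then show ?thesis by simp
qed

lemma goodG_extend:
  assumes sub: "subspace S" and sl: "sublin S p" and gM: "goodG S p M"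
    and x0S: "x0 \<in> S" and nx0: "\<forall>y. (x0, y) \<notin> M"
  shows "\<exists>M'. goodG S p M' \<and> M \<subseteq> M' \<and> M' \<noteq> M"
proof -
  have func: "\<And>x y y'. (x,y)\<in>M \<Longrightarrow> (x,y')\<in>M \<Longrightarrow> y = y'"
    and add: "\<And>x y x' y'. (x,y)\<in>M \<Longrightarrow> (x',y')\<in>M \<Longrightarrow> (x+x', y+y')\<in>M"
    and scl: "\<And>x y c. (x,y)\<in>M \<Longrightarrow> (c *\<^sub>R x, c*y)\<in>M"
    and inS: "\<And>x y. (x,y)\<in>M \<Longrightarrow> x\<in>S"
    and bnd: "\<And>x y. (x,y)\<in>M \<Longrightarrow> y \<le> p x"
    and zero: "(0,0)\<in>M"
    using gM unfolding goodG_def by blast+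
  have padd: "\<And>x y. x\<in>S \<Longrightarrow> y\<in>S \<Longrightarrow> p (x+y) \<le> p x + p y" using sl unfolding sublin_def by blast
  define A where "A = {y - p (x - x0) | x y. (x,y)\<in>M}"
  define a where "a = Sup A"
  have key: "y - p (x - x0) \<le> p (z + x0) - w" if "(x,y)\<in>M" "(z,w)\<in>M" for x y z w
  proof -
    have "(x+z, y+w) \<in> M" using add that by blast
    then have "y + w \<le> p (x+z)" using bnd by blast
    also have "x + z = (x - x0) + (z + x0)" by simp
    also have "p ((x - x0) + (z + x0)) \<le> p (x - x0) + p (z + x0)"
      using padd inS that x0S sub by (meson subspace_diff subspace_add)
    finally show ?thesis by simp
  qed
  have Ane: "A \<noteq> {}" using zero A_def by blast
  have Abdd: "bdd_above A" unfolding bdd_above_def A_def using key[OF _ zero] by force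
  have a_up: "y - p (x - x0) \<le> a" if "(x,y)\<in>M" for x y
    unfolding a_def by (rule cSup_upper[OF _ Abdd]) (use that A_def in blast)
  have a_lo: "a \<le> p (z + x0) - w" if "(z,w)\<in>M" for z w
    unfolding a_def by (rule cSup_least[OF Ane]) (use key that A_def in blast)
  define M' where "M' = {(x + t *\<^sub>R x0, y + t*a) | x y t. (x,y)\<in>M}"
  have memM': "(x + t *\<^sub>R x0, y + t*a) \<in> M'" if "(x,y)\<in>M" for x y t
    using that M'_def by blast
  have "goodG S p M'"
    unfolding goodG_def
  proof (intro conjI allI impI)
    show "(0,0) \<in> M'" using memM'[OF zero, of 0] by simp
  next
    fix x y y' assume "(x,y)\<in>M'" "(x,y')\<in>M'"
    then obtain x1 y1 t1 x2 y2 t2 where h: "(x1,y1)\<in>M" "(x2,y2)\<in>M" "x = x1 + t1 *\<^sub>R x0" "y = y1 + t1*a"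
      "x = x2 + t2 *\<^sub>R x0" "y' = y2 + t2*a" unfolding M'_def by blast
    show "y = y'"
    proof (cases "t1 = t2")
      case True
      then have "x1 = x2" using h by simp
      then show ?thesis using h True func by blast
    next
      case False
      have "(x2 - x1, y2 - y1) \<in> M" using add[OF h(2) scl[OF h(1), of "-1"]] by simp
      then have "((1/(t1-t2)) *\<^sub>R (x2 - x1), (1/(t1-t2)) * (y2 - y1)) \<in> M" by (rule scl)
      moreover have "(1/(t1-t2)) *\<^sub>R (x2 - x1) = x0"
      proof -
        have "x2 - x1 = (t1 - t2) *\<^sub>R x0" using h by (simp add: algebra_simps)
        then show ?thesis using False by simp
      qed
      ultimately show ?thesis using nx0 by metis
    qed
  next
    fix x y x' y' assume "(x,y)\<in>M'" "(x',y')\<in>M'"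
    then obtain x1 y1 t1 x2 y2 t2 where h: "(x1,y1)\<in>M" "(x2,y2)\<in>M" "x = x1 + t1 *\<^sub>R x0" "y = y1 + t1*a"
      "x' = x2 + t2 *\<^sub>R x0" "y' = y2 + t2*a" unfolding M'_def by blast
    have "(x1+x2 + (t1+t2) *\<^sub>R x0, y1+y2 + (t1+t2)*a) \<in> M'" using memM'[OF add[OF h(1,2)]] by blast
    then show "(x+x', y+y') \<in> M'" using h by (simp add: algebra_simps)
  next
    fix x y c assume "(x,y)\<in>M'"
    then obtain x1 y1 t1 where h: "(x1,y1)\<in>M" "x = x1 + t1 *\<^sub>R x0" "y = y1 + t1*a"
      unfolding M'_def by blast
    have "(c *\<^sub>R x1 + (c*t1) *\<^sub>R x0, c*y1 + (c*t1)*a) \<in> M'" using memM'[OF scl[OF h(1)]] by blast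
    then show "(c *\<^sub>R x, c*y) \<in> M'" using h by (simp add: algebra_simps)
  next
    fix x y assume "(x,y)\<in>M'"
    then obtain x1 y1 t where h: "(x1,y1)\<in>M" "x = x1 + t *\<^sub>R x0" "y = y1 + t*a"
      unfolding M'_def by blast
    show "x \<in> S" using h inS x0S sub by (simp add: subspace_add subspace_scale)
    show "y \<le> p x"
    proof (cases "t = 0")
      case True then show ?thesis using h bnd by simp
    next
      case False
      show ?thesis
      proof (cases "t > 0")
        case True
        have m: "((1/t) *\<^sub>R x1, (1/t)*y1) \<in> M" using scl h by blast
        have "a \<le> p ((1/t) *\<^sub>R x1 + x0) - (1/t)*y1" by (rule a_lo[OF m])
        then have "t*a \<le> t * p ((1/t) *\<^sub>R x1 + x0) - y1" using True by (simp add: field_simps)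
        also have "t * p ((1/t) *\<^sub>R x1 + x0) = p (t *\<^sub>R ((1/t) *\<^sub>R x1 + x0))"
          using sublin_eq[OF sl sub _ True] inS[OF m] x0S sub by (simp add: subspace_add)
        also have "t *\<^sub>R ((1/t) *\<^sub>R x1 + x0) = x" using h True by (simp add: algebra_simps)
        finally show ?thesis using h by simp
      next
        case False
        define s where "s = -t"
        have s: "s > 0" using False \<open>t \<noteq> 0\<close> s_def by simp
        have m: "((1/s) *\<^sub>R x1, (1/s)*y1) \<in> M" using scl h by blast
        have "(1/s)*y1 - p ((1/s) *\<^sub>R x1 - x0) \<le> a" by (rule a_up[OF m])
        then have "y1 - s * p ((1/s) *\<^sub>R x1 - x0) \<le> s*a" using s by (simp add: field_simps)
        also have "s * p ((1/s) *\<^sub>R x1 - x0) = p (s *\<^sub>R ((1/s) *\<^sub>R x1 - x0))"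
          using sublin_eq[OF sl sub _ s] inS[OF m] x0S sub by (simp add: subspace_diff)
        also have "s *\<^sub>R ((1/s) *\<^sub>R x1 - x0) = x" using h s s_def by (simp add: algebra_simps)
        finally show ?thesis using h s_def by simp
      qed
    qed
  qed
  moreover have "M \<subseteq> M'" using memM'[of _ _ 0] by auto
  moreover have "(x0, a) \<in> M'" using memM'[OF zero, of 1] by simp
  ultimately show ?thesis using nx0 by blast
qed

lemma hahn_banach:
  assumes sub: "subspace S" and sl: "sublin S p"
  shows "\<exists>g. (\<forall>x\<in>S. \<forall>y\<in>S. g (x+y) = g x + g y) \<and> (\<forall>x\<in>S. \<forall>c. g (c *\<^sub>R x) = c * g x)
           \<and> (\<forall>x\<in>S. g x \<le> p x)"
proof -
  define \<A> where "\<A> = {G. goodG S p G}"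
  have "{(0,0)} \<in> \<A>" unfolding \<A>_def goodG_def using sublin_0[OF sl sub] sub by (auto simp: subspace_0)
  then have ne: "\<A> \<noteq> {}" by blast
  have ch: "\<Union>\<C> \<in> \<A>" if "\<C> \<noteq> {}" "subset.chain \<A> \<C>" for \<C>
  proof -
    have C: "\<C> \<subseteq> \<A>" "\<And>X Y. X\<in>\<C> \<Longrightarrow> Y\<in>\<C> \<Longrightarrow> X \<subseteq> Y \<or> Y \<subseteq> X"
      using that(2) unfolding subset_chain_def by auto
    have g: "\<And>X. X \<in> \<C> \<Longrightarrow> goodG S p X" using C(1) \<A>_def by blast
    have two: "\<exists>Z\<in>\<C>. a \<in> Z \<and> b \<in> Z" if "a \<in> \<Union>\<C>" "b \<in> \<Union>\<C>" for a b
      using that C(2) by blast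
    show ?thesis unfolding \<A>_def mem_Collect_eq goodG_def
    proof (intro conjI allI impI)
      from that(1) obtain X where "X\<in>\<C>" by blast
      then show "(0,0) \<in> \<Union>\<C>" using g unfolding goodG_def by blast
    next
      fix x y y' assume "(x,y)\<in>\<Union>\<C>" "(x,y')\<in>\<Union>\<C>"
      then obtain Z where "Z\<in>\<C>" "(x,y)\<in>Z" "(x,y')\<in>Z" using two by blast
      then show "y = y'" using g unfolding goodG_def by blast
    next
      fix x y x' y' assume "(x,y)\<in>\<Union>\<C>" "(x',y')\<in>\<Union>\<C>"
      then obtain Z where "Z\<in>\<C>" "(x,y)\<in>Z" "(x',y')\<in>Z" using two by blast
      then show "(x+x',y+y') \<in> \<Union>\<C>" using g unfolding goodG_def by blast
    next
      fix x y c assume "(x,y)\<in>\<Union>\<C>"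
      then show "(c *\<^sub>R x, c*y) \<in> \<Union>\<C>" using g unfolding goodG_def by blast
    next
      fix x y assume "(x,y)\<in>\<Union>\<C>"
      then show "x \<in> S" "y \<le> p x" using g unfolding goodG_def by blast+
    qed
  qed
  obtain M where M: "M \<in> \<A>" "\<And>X. X\<in>\<A> \<Longrightarrow> M \<subseteq> X \<Longrightarrow> X = M"
    using subset_Zorn_nonempty[OF ne ch] by blast
  have gM: "goodG S p M" using M(1) \<A>_def by blast
  have tot: "\<exists>y. (x,y)\<in>M" if xS: "x\<in>S" for x
  proof (rule ccontr)
    assume "\<not> ?thesis"
    then obtain M' where "goodG S p M'" "M \<subseteq> M'" "M' \<noteq> M"
      using goodG_extend[OF sub sl gM xS] by blast
    then show False using M(2) \<A>_def by blast
  qed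
  define g where "g x = (THE y. (x,y)\<in>M)" for x
  have gx: "(x, g x) \<in> M" if xS: "x\<in>S" for x
  proof -
    obtain y where y: "(x,y)\<in>M" using tot[OF xS] by blast
    have "g x = y" unfolding g_def
    proof (rule the_equality)
      show "(x,y) \<in> M" by (rule y)
      fix y' assume "(x,y') \<in> M" then show "y' = y" using gM y unfolding goodG_def by blast
    qed
    then show ?thesis using y by simp
  qed
  have geq: "g x = y" if "(x,y)\<in>M" "x \<in> S" for x y
    using gx[OF that(2)] that(1) gM unfolding goodG_def by blast
  show ?thesis
  proof (intro exI conjI ballI allI)
    fix x y assume "x\<in>S" "y\<in>S"
    have "(x+y, g x + g y)\<in>M" using gM gx[OF \<open>x\<in>S\<close>] gx[OF \<open>y\<in>S\<close>] unfolding goodG_def by blast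
    then show "g (x+y) = g x + g y" using geq sub \<open>x\<in>S\<close> \<open>y\<in>S\<close> by (simp add: subspace_add)
  next
    fix x c assume "x\<in>S"
    have "(c *\<^sub>R x, c * g x)\<in>M" using gM gx[OF \<open>x\<in>S\<close>] unfolding goodG_def by blast
    then show "g (c *\<^sub>R x) = c * g x" using geq sub \<open>x\<in>S\<close> by (simp add: subspace_scale)
  next
    fix x assume "x\<in>S"
    then show "g x \<le> p x" using gx gM unfolding goodG_def by blast
  qed
qed




instantiation "fun" :: (type, real_vector) real_vector
begin
definition scaleR_fun :: "real \<Rightarrow> ('a \<Rightarrow> 'b) \<Rightarrow> 'a \<Rightarrow> 'b" where
  "scaleR_fun c f = (\<lambda>x. c *\<^sub>R f x)"
instance by standard (auto simp: scaleR_fun_def plus_fun_def fun_diff_def fun_eq_iff algebra_simps)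
end

lemma seq0: fixes a :: "nat \<Rightarrow> real" assumes "\<And>k. 0 \<le> a k" "\<And>k. a k \<le> 1/(real k+1)"
  shows "a \<longlonglongrightarrow> 0"
proof (rule tendsto_sandwich[OF _ _ tendsto_const LIMSEQ_inverse_real_of_nat])
  show "\<forall>\<^sub>F n in sequentially. 0 \<le> a n" using assms by simp
  show "\<forall>\<^sub>F n in sequentially. a n \<le> inverse (real (Suc n))" using assms(2) by (simp add: field_simps)
qed

context
  fixes V :: "'v::real_vector set" and n :: "'v \<Rightarrow> real"
  assumes ns: "normed_subspace V n"
begin

lemma ns_sub: "subspace V" using ns unfolding normed_subspace_def by blast
lemma ns_nonneg: "x \<in> V \<Longrightarrow> 0 \<le> n x" using ns unfolding normed_subspace_def by (elim conjE) (rule bspec)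
lemma ns_zero_iff: "x \<in> V \<Longrightarrow> n x = 0 \<longleftrightarrow> x = 0" using ns unfolding normed_subspace_def by (elim conjE) (rule bspec)
lemma ns_tri: "x \<in> V \<Longrightarrow> y \<in> V \<Longrightarrow> n (x + y) \<le> n x + n y"
proof -
  have "\<forall>x\<in>V. \<forall>y\<in>V. n (x + y) \<le> n x + n y" using ns unfolding normed_subspace_def by (elim conjE)
  then show "x \<in> V \<Longrightarrow> y \<in> V \<Longrightarrow> n (x + y) \<le> n x + n y" by simp
qed
lemma ns_scale: "x \<in> V \<Longrightarrow> n (c *\<^sub>R x) = \<bar>c\<bar> * n x"
proof -
  have "\<forall>c. \<forall>x\<in>V. n (c *\<^sub>R x) = \<bar>c\<bar> * n x" using ns unfolding normed_subspace_def by (elim conjE)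
  then show "x \<in> V \<Longrightarrow> n (c *\<^sub>R x) = \<bar>c\<bar> * n x" by simp
qed
lemma Vd: "a \<in> V \<Longrightarrow> b \<in> V \<Longrightarrow> a - b \<in> V" by (rule subspace_diff[OF ns_sub])
lemma Va: "a \<in> V \<Longrightarrow> b \<in> V \<Longrightarrow> a + b \<in> V" by (rule subspace_add[OF ns_sub])
lemma Vs: "a \<in> V \<Longrightarrow> c *\<^sub>R a \<in> V" by (rule subspace_scale[OF ns_sub])
lemma Vn: "a \<in> V \<Longrightarrow> - a \<in> V" by (rule subspace_neg[OF ns_sub])

lemma ns_0: "n 0 = 0"
proof -
  have "(0::'v) \<in> V" using ns_sub by (rule subspace_0)
  then show ?thesis using ns_zero_iff by blast
qed
lemma ns_minus: "x \<in> V \<Longrightarrow> n (- x) = n x"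
proof -
  assume x: "x \<in> V"
  have "n ((-1) *\<^sub>R x) = \<bar>-1\<bar> * n x" by (rule ns_scale[OF x])
  then show ?thesis by simp
qed
lemma ns_sym: "x \<in> V \<Longrightarrow> y \<in> V \<Longrightarrow> n (x - y) = n (y - x)"
proof -
  assume "x \<in> V" "y \<in> V"
  then have "y - x \<in> V" using ns_sub by (rule_tac subspace_diff) auto
  then have "n (- (y - x)) = n (y - x)" by (rule ns_minus)
  then show ?thesis by simp
qed
lemma ns_conv: "x \<in> V \<Longrightarrow> y \<in> V \<Longrightarrow> a \<ge> 0 \<Longrightarrow> b \<ge> 0 \<Longrightarrow> n (a *\<^sub>R x + b *\<^sub>R y) \<le> a * n x + b * n y"
proof -
  assume h: "x \<in> V" "y \<in> V" "a \<ge> 0" "b \<ge> 0"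
  have "a *\<^sub>R x \<in> V" "b *\<^sub>R y \<in> V" using h ns_sub by (auto intro: subspace_scale)
  then have "n (a *\<^sub>R x + b *\<^sub>R y) \<le> n (a *\<^sub>R x) + n (b *\<^sub>R y)" by (rule ns_tri)
  also have "n (a *\<^sub>R x) = a * n x" using ns_scale[OF h(1), of a] h(3) by simp
  also have "n (b *\<^sub>R y) = b * n y" using ns_scale[OF h(2), of b] h(4) by simp
  finally show ?thesis .
qed
lemma ns_tri3: "x \<in> V \<Longrightarrow> y \<in> V \<Longrightarrow> z \<in> V \<Longrightarrow> n (x - z) \<le> n (x - y) + n (y - z)"
proof -
  assume h: "x \<in> V" "y \<in> V" "z \<in> V"
  have "x - y \<in> V" "y - z \<in> V" using h ns_sub by (auto intro: subspace_diff)
  then have "n ((x - y) + (y - z)) \<le> n (x - y) + n (y - z)" by (rule ns_tri)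
  then show ?thesis by simp
qed

lemma separation:
  assumes CV: "C \<subseteq> V" and Cne: "C \<noteq> {}" and Ccv: "convex C"
    and Ccl: "\<forall>us u. (\<forall>i. us i \<in> C) \<and> u \<in> V \<and> (\<lambda>i. n (us i - u)) \<longlonglongrightarrow> 0 \<longrightarrow> u \<in> C"
    and xV: "x \<in> V" and xC: "x \<notin> C"
  shows "\<exists>\<phi>\<in>dual_space V n. \<exists>\<delta>. (\<forall>c\<in>C. \<phi> c \<le> \<delta>) \<and> \<delta> < \<phi> x"
proof -
  have sub: "subspace V" by (rule ns_sub)
  have "\<exists>d>0. \<forall>c\<in>C. d \<le> n (c - x)"
  proof (rule ccontr)
    assume "\<not> ?thesis"
    then have h: "\<And>e. e > 0 \<Longrightarrow> \<exists>c\<in>C. n (c - x) < e" by (simp add: not_le)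
    have "\<forall>k::nat. \<exists>c\<in>C. n (c - x) < 1/(real k + 1)"
    proof
      fix k :: nat have "1/(real k + 1) > 0" by simp
      then show "\<exists>c\<in>C. n (c - x) < 1/(real k + 1)" by (rule h)
    qed
    then have "\<exists>us. \<forall>k. us k \<in> C \<and> n (us k - x) < 1/(real k + 1)"
      by (intro choice) blast
    then obtain us where us: "\<And>k. us k \<in> C \<and> n (us k - x) < 1/(real k + 1)" by blast
    have "(\<lambda>i. n (us i - x)) \<longlonglongrightarrow> 0"
    proof (rule seq0)
      fix k
      have "us k - x \<in> V" using us[of k] CV xV by (intro Vd) auto
      then show "0 \<le> n (us k - x)" by (rule ns_nonneg)
      show "n (us k - x) \<le> 1/(real k + 1)" using us[of k] by simp
    qed
    then have "x \<in> C" using Ccl[rule_format, of us x] us xV by blast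
    with xC show False by simp
  qed
  then obtain d where d: "d > 0" "\<And>c. c\<in>C \<Longrightarrow> d \<le> n (c - x)" by blast
  obtain c0 where c0: "c0 \<in> C" using Cne by blast
  define A where "A y = {n (y + t *\<^sub>R (c - x)) - t*d | t c. t \<ge> 0 \<and> c \<in> C}" for y
  define p where "p y = Inf (A y)" for y
  have Amem: "n (y + t *\<^sub>R (c - x)) - t*d \<in> A y" if "t \<ge> 0" "c \<in> C" for y t c
    unfolding A_def using that by blast
  have Ane: "A y \<noteq> {}" for y using Amem[OF _ c0, of 0] by blast
  have Alow: "- n y \<le> a" if "y \<in> V" "a \<in> A y" for y a
  proof -
    from that(2) obtain t c where tc: "t \<ge> 0" "c \<in> C" "a = n (y + t *\<^sub>R (c - x)) - t*d" unfolding A_def by blast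
    have cx: "c - x \<in> V" using tc CV xV by (intro Vd) auto
    have "n (t *\<^sub>R (c - x)) \<le> n (-y) + n (y + t *\<^sub>R (c - x))"
    proof -
      have "-y \<in> V" "y + t *\<^sub>R (c - x) \<in> V" using that(1) cx by (auto intro!: Vn Va Vs)
      then have "n (-y + (y + t *\<^sub>R (c - x))) \<le> n (-y) + n (y + t *\<^sub>R (c - x))" by (rule ns_tri)
      then show ?thesis by simp
    qed
    moreover have "n (t *\<^sub>R (c - x)) = t * n (c - x)" using ns_scale[OF cx, of t] tc by simp
    moreover have "t * d \<le> t * n (c - x)" using d tc by (simp add: mult_left_mono)
    ultimately show ?thesis using tc ns_minus that(1) by simp
  qed
  have Abdd: "bdd_below (A y)" if "y \<in> V" for y using Alow[OF that] unfolding bdd_below_def by blast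
  have p_le: "p y \<le> a" if "y \<in> V" "a \<in> A y" for y a
    unfolding p_def by (rule cInf_lower[OF that(2) Abdd[OF that(1)]])
  have p_ge: "b \<le> p y" if "\<And>a. a \<in> A y \<Longrightarrow> b \<le> a" for y b
    unfolding p_def by (rule cInf_greatest[OF Ane that])
  have p_n: "p y \<le> n y" if "y \<in> V" for y
    using p_le[OF that Amem[OF _ c0, of 0]] by simp
  have sl: "sublin V p"
    unfolding sublin_def
  proof (intro conjI ballI allI impI)
    fix y1 y2 assume y: "y1 \<in> V" "y2 \<in> V"
    have main: "p (y1+y2) \<le> a1 + a2" if a: "a1 \<in> A y1" "a2 \<in> A y2" for a1 a2
    proof -
      from a(1) obtain t1 c1 where 1: "t1 \<ge> 0" "c1 \<in> C" "a1 = n (y1 + t1 *\<^sub>R (c1 - x)) - t1*d" unfolding A_def by blast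
      from a(2) obtain t2 c2 where 2: "t2 \<ge> 0" "c2 \<in> C" "a2 = n (y2 + t2 *\<^sub>R (c2 - x)) - t2*d" unfolding A_def by blast
      have v1: "y1 + t1 *\<^sub>R (c1 - x) \<in> V" "y2 + t2 *\<^sub>R (c2 - x) \<in> V"
        using 1 2 y CV xV by (auto intro!: Vd Va Vs)
      define t where "t = t1 + t2"
      obtain c where c: "c \<in> C" "t *\<^sub>R (c - x) = t1 *\<^sub>R (c1 - x) + t2 *\<^sub>R (c2 - x)"
      proof (cases "t = 0")
        case True
        then have "t1 = 0" "t2 = 0" using 1 2 t_def by auto
        then show ?thesis using that[of c1] 1 True by simp
      next
        case False
        then have tp: "t > 0" using 1 2 t_def by simp
        define c where "c = (t1/t) *\<^sub>R c1 + (t2/t) *\<^sub>R c2"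
        have s1: "t1/t + t2/t = 1" using tp t_def by (simp add: add_divide_distrib[symmetric])
        have cC: "c \<in> C" unfolding c_def using 1 2 tp s1
          by (intro convexD[OF Ccv]) auto
        have tc: "t *\<^sub>R c = t1 *\<^sub>R c1 + t2 *\<^sub>R c2"
          unfolding c_def using tp by (simp add: scaleR_add_right)
        have "t *\<^sub>R (c - x) = t *\<^sub>R c - (t1 + t2) *\<^sub>R x" using t_def by (simp add: scaleR_diff_right)
        also have "\<dots> = t1 *\<^sub>R (c1 - x) + t2 *\<^sub>R (c2 - x)"
          using tc by (simp add: algebra_simps)
        finally show ?thesis using that cC by blast
      qed
      have "n (y1 + y2 + t *\<^sub>R (c - x)) - t*d \<in> A (y1+y2)" using c 1 2 t_def by (intro Amem) auto
      then have "p (y1+y2) \<le> n (y1 + y2 + t *\<^sub>R (c - x)) - t*d"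
        using p_le y sub by (simp add: subspace_add)
      also have "y1 + y2 + t *\<^sub>R (c - x) = (y1 + t1 *\<^sub>R (c1 - x)) + (y2 + t2 *\<^sub>R (c2 - x))"
        using c by (simp add: algebra_simps)
      also have "n (\<dots>) \<le> n (y1 + t1 *\<^sub>R (c1 - x)) + n (y2 + t2 *\<^sub>R (c2 - x))"
        using ns_tri v1 by blast
      finally show ?thesis using 1 2 t_def by (simp add: algebra_simps)
    qed
    have "p (y1+y2) - a2 \<le> p y1" if "a2 \<in> A y2" for a2
    proof (rule p_ge)
      fix a assume a1: "a \<in> A y1" then show "p (y1+y2) - a2 \<le> a" using main[OF a1 that] by simp
    qed
    then have "p (y1+y2) - p y1 \<le> p y2"
    proof (intro p_ge)
      fix a assume "a \<in> A y2" then show "p (y1+y2) - p y1 \<le> a" using \<open>\<And>a2. a2 \<in> A y2 \<Longrightarrow> _\<close>[of a] by simp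
    qed
    then show "p (y1+y2) \<le> p y1 + p y2" by simp
  next
    fix y and c :: real assume y: "y \<in> V" and c: "c > 0"
    have "p (c *\<^sub>R y) \<le> c * a" if a: "a \<in> A y" for a
    proof -
      from a obtain t c' where 1: "t \<ge> 0" "c' \<in> C" "a = n (y + t *\<^sub>R (c' - x)) - t*d" unfolding A_def by blast
      have v: "y + t *\<^sub>R (c' - x) \<in> V" using 1 y CV xV by (auto intro!: Vd Va Vs)
      have "n (c *\<^sub>R y + (c*t) *\<^sub>R (c' - x)) - (c*t)*d \<in> A (c *\<^sub>R y)"
        using 1 c by (intro Amem) auto
      then have "p (c *\<^sub>R y) \<le> n (c *\<^sub>R y + (c*t) *\<^sub>R (c' - x)) - (c*t)*d"
        using p_le y sub by (simp add: subspace_scale)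
      also have "c *\<^sub>R y + (c*t) *\<^sub>R (c' - x) = c *\<^sub>R (y + t *\<^sub>R (c' - x))" by (simp add: algebra_simps)
      also have "n (\<dots>) = c * n (y + t *\<^sub>R (c' - x))" using ns_scale v c by simp
      finally have "p (c *\<^sub>R y) \<le> c * n (y + t *\<^sub>R (c' - x)) - c * t * d" by simp
      moreover have "c * a = c * n (y + t *\<^sub>R (c' - x)) - c * t * d" using 1(3) by (simp add: right_diff_distrib)
      ultimately show ?thesis by linarith
    qed
    then have "p (c *\<^sub>R y) / c \<le> p y" using c by (intro p_ge) (simp add: field_simps)
    then show "p (c *\<^sub>R y) \<le> c * p y" using c by (simp add: field_simps)
  qed
  obtain g where g: "\<And>a b. a\<in>V \<Longrightarrow> b\<in>V \<Longrightarrow> g (a+b) = g a + g b"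
    "\<And>a c. a\<in>V \<Longrightarrow> g (c *\<^sub>R a) = c * g a" "\<And>a. a\<in>V \<Longrightarrow> g a \<le> p a"
    using hahn_banach[OF sub sl] by blast
  define \<phi> where "\<phi> z = (if z \<in> V then - g z else 0)" for z
  have gbd: "\<bar>g z\<bar> \<le> n z" if "z \<in> V" for z
  proof -
    have "g z \<le> n z" using g(3)[OF that] p_n[OF that] by linarith
    moreover have "- g z \<le> n z"
    proof -
      have "-z \<in> V" using that sub by (simp add: subspace_neg)
      then have "g (-z) \<le> n (-z)" using g(3) p_n by (meson order_trans)
      moreover have "g (-z) = - g z" using g(2)[OF that, of "-1"] by simp
      ultimately show ?thesis using ns_minus that by simp
    qed
    ultimately show ?thesis by simp
  qed
  have "\<phi> \<in> dual_space V n"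
    unfolding dual_space_def
  proof (intro CollectI conjI allI ballI impI exI)
    fix z assume "z \<notin> V" then show "\<phi> z = 0" by (simp add: \<phi>_def)
  next
    fix a b assume "a \<in> V" "b \<in> V" then show "\<phi> (a+b) = \<phi> a + \<phi> b"
      using g(1) sub by (simp add: \<phi>_def subspace_add)
  next
    fix c a assume "a \<in> V" then show "\<phi> (c *\<^sub>R a) = c * \<phi> a"
      using g(2) sub by (simp add: \<phi>_def subspace_scale)
  next
    fix z assume "z \<in> V" then show "\<bar>\<phi> z\<bar> \<le> 1 * n z" using gbd by (simp add: \<phi>_def)
  qed
  moreover have "\<phi> c \<le> \<phi> x - d" if c: "c \<in> C" for c
  proof -
    have cV: "c \<in> V" using c CV by blast
    have xc: "x - c \<in> V" using cV xV sub by (simp add: subspace_diff)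
    have "n ((x - c) + 1 *\<^sub>R (c - x)) - 1*d \<in> A (x - c)" using c by (intro Amem) auto
    then have "p (x - c) \<le> - d" using p_le[OF xc] ns_0 by simp
    then have "g (x - c) \<le> - d" using g(3)[OF xc] by simp
    moreover have "g (x - c) = g x - g c" using g(1)[OF xc cV] by simp
    ultimately show ?thesis using cV xV by (simp add: \<phi>_def)
  qed
  ultimately show ?thesis using d(1) by (intro bexI[of _ \<phi>] exI[of _ "\<phi> x - d"]) auto
qed

end




lemma rb_ns: "reflexive_banach V n \<Longrightarrow> normed_subspace V n"
  unfolding reflexive_banach_def banach_subspace_def by blast

context
  fixes V :: "'v::real_vector set" and n :: "'v \<Rightarrow> real"
  assumes ns: "normed_subspace V n"
begin

lemma dual_zero: "\<phi> \<in> dual_space V n \<Longrightarrow> \<phi> 0 = 0"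
proof -
  assume "\<phi> \<in> dual_space V n"
  then have "\<phi> (0 *\<^sub>R 0) = 0 * \<phi> 0" unfolding dual_space_def using subspace_0[OF ns_sub[OF ns]] by blast
  then show ?thesis by simp
qed

lemma dual_bdd: assumes "\<phi> \<in> dual_space V n" shows "bdd_above {\<bar>\<phi> x\<bar> | x. x \<in> V \<and> n x \<le> 1}"
proof -
  obtain C where C: "\<And>x. x\<in>V \<Longrightarrow> \<bar>\<phi> x\<bar> \<le> C * n x" using assms unfolding dual_space_def by blast
  have "\<bar>\<phi> x\<bar> \<le> \<bar>C\<bar>" if "x \<in> V" "n x \<le> 1" for x
  proof -
    have "C * n x \<le> \<bar>C\<bar> * n x" using ns_nonneg[OF ns that(1)] by (simp add: mult_right_mono)
    also have "\<dots> \<le> \<bar>C\<bar>" using that(2) by (simp add: mult_left_le)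
    finally show ?thesis using C[OF that(1)] by simp
  qed
  then show ?thesis unfolding bdd_above_def by blast
qed

lemma dual_le: assumes phi: "\<phi> \<in> dual_space V n" and x: "x \<in> V"
  shows "\<bar>\<phi> x\<bar> \<le> dual_norm V n \<phi> * n x"
proof (cases "n x = 0")
  case True
  then have "x = 0" using ns_zero_iff[OF ns x] by simp
  then show ?thesis using dual_zero[OF phi] True by simp
next
  case False
  then have nx: "n x > 0" using ns_nonneg[OF ns x] by simp
  define y where "y = (1 / n x) *\<^sub>R x"
  have yV: "y \<in> V" using x y_def Vs[OF ns] by blast
  have ny: "n y = 1" using ns_scale[OF ns x, of "1 / n x"] nx y_def by simp
  have "\<bar>\<phi> y\<bar> \<le> dual_norm V n \<phi>" unfolding dual_norm_def
    by (rule cSup_upper[OF _ dual_bdd[OF phi]]) (use yV ny in auto)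
  moreover have "\<phi> y = \<phi> x / n x" using phi x unfolding dual_space_def y_def by simp
  ultimately show ?thesis using nx by (simp add: abs_div divide_le_eq)
qed

lemma dual_norm_nonneg: assumes "\<phi> \<in> dual_space V n" shows "0 \<le> dual_norm V n \<phi>"
proof -
  have "\<bar>\<phi> 0\<bar> \<le> dual_norm V n \<phi>" unfolding dual_norm_def
    by (rule cSup_upper[OF _ dual_bdd[OF assms]]) (use subspace_0[OF ns_sub[OF ns]] ns_0[OF ns] in auto)
  then show ?thesis by simp
qed

lemma dual_sub: "subspace (dual_space V n)"
  unfolding subspace_def
proof (intro conjI ballI allI)
  show "0 \<in> dual_space V n" unfolding dual_space_def by (auto simp: zero_fun_def intro: exI[of _ 0])
next
  fix \<phi> \<psi> assume a: "\<phi> \<in> dual_space V n" "\<psi> \<in> dual_space V n"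
  obtain C1 where C1: "\<And>x. x\<in>V \<Longrightarrow> \<bar>\<phi> x\<bar> \<le> C1 * n x"
    using a(1) unfolding dual_space_def by blast
  obtain C2 where C2: "\<And>x. x\<in>V \<Longrightarrow> \<bar>\<psi> x\<bar> \<le> C2 * n x"
    using a(2) unfolding dual_space_def by blast
  note C = C1 C2
  have "\<bar>\<phi> x + \<psi> x\<bar> \<le> (C1 + C2) * n x" if "x\<in>V" for x
    using C[OF that] abs_triangle_ineq[of "\<phi> x" "\<psi> x"] by (simp add: algebra_simps)
  then show "\<phi> + \<psi> \<in> dual_space V n" using a unfolding dual_space_def plus_fun_def
    by (auto simp: algebra_simps intro!: exI[of _ "C1+C2"])
next
  fix c and \<phi> :: "'v \<Rightarrow> real" assume a: "\<phi> \<in> dual_space V n"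
  then obtain C1 where C: "\<And>x. x\<in>V \<Longrightarrow> \<bar>\<phi> x\<bar> \<le> C1 * n x"
    unfolding dual_space_def by blast
  have "\<bar>c * \<phi> x\<bar> \<le> (\<bar>c\<bar> * C1) * n x" if "x\<in>V" for x
    using C[OF that] by (simp add: abs_mult mult.assoc mult_left_mono)
  then show "c *\<^sub>R \<phi> \<in> dual_space V n" using a unfolding dual_space_def scaleR_fun_def
    by (auto simp: algebra_simps intro!: exI[of _ "\<bar>c\<bar> * C1"])
qed

end

lemma nested_inter:
  assumes rb: "reflexive_banach V n"
  and Cs: "\<And>k. Cs k \<subseteq> V" "\<And>k. Cs k \<noteq> {}" "\<And>k. convex (Cs k)"
    "\<And>k. \<forall>us u. (\<forall>i. us i \<in> Cs k) \<and> u \<in> V \<and> (\<lambda>i. n (us i - u)) \<longlonglongrightarrow> 0 \<longrightarrow> u \<in> Cs k"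
    "\<And>k. Cs (Suc k) \<subseteq> Cs k"
  and M: "\<And>x. x\<in>Cs 0 \<Longrightarrow> n x \<le> M"
  shows "\<exists>x. \<forall>k. x \<in> Cs k"
proof -
  have ns: "normed_subspace V n" by (rule rb_ns[OF rb])
  have anti: "Cs k \<subseteq> Cs k1" if "k1 \<le> k" for k k1
    using lift_Suc_antimono_le[of Cs, OF Cs(5) that] .
  define D where "D = dual_space V n"
  have subD: "subspace D" unfolding D_def by (rule dual_sub[OF ns])
  define S where "S \<phi> = {s. \<exists>k. \<forall>x\<in>Cs k. \<phi> x \<le> s}" for \<phi> :: "'a \<Rightarrow> real"
  define p where "p \<phi> = Inf (S \<phi>)" for \<phi>
  have bnd: "\<bar>\<phi> x\<bar> \<le> dual_norm V n \<phi> * M" if "\<phi> \<in> D" "x \<in> Cs k" for \<phi> x k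
  proof -
    have x0: "x \<in> Cs 0" using anti[of 0 k] that(2) by auto
    have xV: "x \<in> V" using Cs(1) x0 by blast
    have "\<bar>\<phi> x\<bar> \<le> dual_norm V n \<phi> * n x" using dual_le[OF ns _ xV] that(1) D_def by blast
    also have "\<dots> \<le> dual_norm V n \<phi> * M"
      using M[OF x0] dual_norm_nonneg[OF ns] that(1) D_def by (simp add: mult_left_mono)
    finally show ?thesis .
  qed
  have Sne: "dual_norm V n \<phi> * M \<in> S \<phi>" if "\<phi> \<in> D" for \<phi>
    unfolding S_def using bnd[OF that] by (auto intro!: exI[of _ 0] simp: abs_le_iff)
  have Slow: "- (dual_norm V n \<phi> * M) \<le> s" if "\<phi> \<in> D" "s \<in> S \<phi>" for \<phi> s
  proof -
    from that(2) obtain k where k: "\<forall>x\<in>Cs k. \<phi> x \<le> s" unfolding S_def by blast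
    obtain x where x: "x \<in> Cs k" using Cs(2) by blast
    show ?thesis using k x bnd[OF that(1) x] by (auto simp: abs_le_iff)
  qed
  have p_le: "p \<phi> \<le> s" if "\<phi> \<in> D" "s \<in> S \<phi>" for \<phi> s
    unfolding p_def by (rule cInf_lower[OF that(2)]) (use Slow[OF that(1)] in \<open>auto simp: bdd_below_def\<close>)
  have p_ge: "b \<le> p \<phi>" if "\<phi> \<in> D" "\<And>s. s \<in> S \<phi> \<Longrightarrow> b \<le> s" for \<phi> b
    unfolding p_def by (rule cInf_greatest) (use Sne[OF that(1)] that(2) in auto)
  have sl: "sublin D p"
    unfolding sublin_def
  proof (intro conjI ballI allI impI)
    fix \<phi> \<psi> assume a: "\<phi> \<in> D" "\<psi> \<in> D"
    have phD: "\<phi> + \<psi> \<in> D" using subD a by (simp add: subspace_add)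
    have main: "p (\<phi> + \<psi>) \<le> s1 + s2" if s: "s1 \<in> S \<phi>" "s2 \<in> S \<psi>" for s1 s2
    proof -
      from s(1) obtain k1 where k1: "\<forall>x\<in>Cs k1. \<phi> x \<le> s1" unfolding S_def by blast
      from s(2) obtain k2 where k2: "\<forall>x\<in>Cs k2. \<psi> x \<le> s2" unfolding S_def by blast
      have "\<forall>x\<in>Cs (max k1 k2). (\<phi> + \<psi>) x \<le> s1 + s2"
        using k1 k2 anti[of k1 "max k1 k2"] anti[of k2 "max k1 k2"] by (force simp: plus_fun_def intro: add_mono)
      then have "s1 + s2 \<in> S (\<phi> + \<psi>)" unfolding S_def by blast
      then show ?thesis by (rule p_le[OF phD])
    qed
    have "p (\<phi> + \<psi>) - s2 \<le> p \<phi>" if s2: "s2 \<in> S \<psi>" for s2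
    proof (rule p_ge[OF a(1)])
      fix s assume s1: "s \<in> S \<phi>" then show "p (\<phi> + \<psi>) - s2 \<le> s" using main[OF s1 s2] by simp
    qed
    then have "p (\<phi> + \<psi>) - p \<phi> \<le> p \<psi>"
    proof (intro p_ge[OF a(2)])
      fix s assume "s \<in> S \<psi>" then show "p (\<phi> + \<psi>) - p \<phi> \<le> s" using \<open>\<And>s2. s2 \<in> S \<psi> \<Longrightarrow> _\<close>[of s] by simp
    qed
    then show "p (\<phi> + \<psi>) \<le> p \<phi> + p \<psi>" by simp
  next
    fix \<phi> and c :: real assume a: "\<phi> \<in> D" and c: "c > 0"
    have cD: "c *\<^sub>R \<phi> \<in> D" using subD a by (simp add: subspace_scale)
    have "p (c *\<^sub>R \<phi>) \<le> c * s" if s: "s \<in> S \<phi>" for s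
    proof -
      from s obtain k where k: "\<forall>x\<in>Cs k. \<phi> x \<le> s" unfolding S_def by blast
      have "\<forall>x\<in>Cs k. (c *\<^sub>R \<phi>) x \<le> c * s" using k c by (simp add: scaleR_fun_def)
      then have "c * s \<in> S (c *\<^sub>R \<phi>)" unfolding S_def by blast
      then show ?thesis by (rule p_le[OF cD])
    qed
    then have "p (c *\<^sub>R \<phi>) / c \<le> p \<phi>" using c by (intro p_ge[OF a]) (simp add: field_simps)
    then show "p (c *\<^sub>R \<phi>) \<le> c * p \<phi>" using c by (simp add: field_simps)
  qed
  obtain \<Phi> where \<Phi>: "\<And>a b. a\<in>D \<Longrightarrow> b\<in>D \<Longrightarrow> \<Phi> (a+b) = \<Phi> a + \<Phi> b"
    "\<And>a c. a\<in>D \<Longrightarrow> \<Phi> (c *\<^sub>R a) = c * \<Phi> a" "\<And>a. a\<in>D \<Longrightarrow> \<Phi> a \<le> p a"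
    using hahn_banach[OF subD sl] by blast
  have \<Phi>bd: "\<bar>\<Phi> \<phi>\<bar> \<le> M * dual_norm V n \<phi>" if ph: "\<phi> \<in> D" for \<phi>
  proof -
    have up: "\<Phi> \<psi> \<le> dual_norm V n \<psi> * M" if "\<psi> \<in> D" for \<psi>
      using \<Phi>(3)[OF that] p_le[OF that Sne[OF that]] by linarith
    have mD: "(-1) *\<^sub>R \<phi> \<in> D" by (rule subspace_scale[OF subD ph])
    have "dual_norm V n ((-1) *\<^sub>R \<phi>) = dual_norm V n \<phi>"
      unfolding dual_norm_def scaleR_fun_def by simp
    then have "- \<Phi> \<phi> \<le> dual_norm V n \<phi> * M" using up[OF mD] \<Phi>(2)[OF ph, of "-1"] by simp
    then show ?thesis using up[OF ph] by (simp add: abs_le_iff mult.commute)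
  qed
  have "\<exists>x\<in>V. \<forall>\<phi>\<in>dual_space V n. \<Phi> \<phi> = \<phi> x"
  proof -
    have R: "\<forall>\<Phi> :: ('a \<Rightarrow> real) \<Rightarrow> real.
        (\<forall>\<phi>\<in>dual_space V n. \<forall>\<psi>\<in>dual_space V n. \<Phi> (\<lambda>x. \<phi> x + \<psi> x) = \<Phi> \<phi> + \<Phi> \<psi>) \<and>
        (\<forall>c. \<forall>\<phi>\<in>dual_space V n. \<Phi> (\<lambda>x. c * \<phi> x) = c * \<Phi> \<phi>) \<and>
        (\<exists>C. \<forall>\<phi>\<in>dual_space V n. \<bar>\<Phi> \<phi>\<bar> \<le> C * dual_norm V n \<phi>)
        \<longrightarrow> (\<exists>x\<in>V. \<forall>\<phi>\<in>dual_space V n. \<Phi> \<phi> = \<phi> x)"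
      using rb unfolding reflexive_banach_def by blast
    have e1: "(\<lambda>x. \<phi> x + \<psi> x) = \<phi> + \<psi>" for \<phi> \<psi> :: "'a \<Rightarrow> real" by (simp add: plus_fun_def)
    have e2: "(\<lambda>x. c * \<phi> x) = c *\<^sub>R \<phi>" for c and \<phi> :: "'a \<Rightarrow> real" by (simp add: scaleR_fun_def)
    show ?thesis
      apply (rule R[rule_format])
      using \<Phi>(1,2) \<Phi>bd unfolding e1 e2 D_def by blast
  qed
  then obtain x where xV: "x \<in> V" and xr: "\<And>\<phi>. \<phi> \<in> D \<Longrightarrow> \<Phi> \<phi> = \<phi> x" unfolding D_def by blast
  have "x \<in> Cs k" for k
  proof (rule ccontr)
    assume nx: "x \<notin> Cs k"
    obtain \<phi> \<delta> where ph: "\<phi> \<in> D" "\<And>c. c \<in> Cs k \<Longrightarrow> \<phi> c \<le> \<delta>" "\<delta> < \<phi> x"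
      using separation[OF ns Cs(1) Cs(2) Cs(3) Cs(4) xV nx] unfolding D_def by blast
    have "\<delta> \<in> S \<phi>" unfolding S_def using ph(2) by blast
    then have "\<phi> x \<le> \<delta>" using \<Phi>(3)[OF ph(1)] p_le[OF ph(1)] xr[OF ph(1)] by fastforce
    then show False using ph(3) by simp
  qed
  then show ?thesis by blast
qed




lemma eps_inter:
  assumes rb: "reflexive_banach V n"
    and Q: "\<And>k. Q k \<subseteq> V" "\<And>k. Q k \<noteq> {}" "\<And>k. convex (Q k)" "\<And>k. Q (Suc k) \<subseteq> Q k"
    and M: "\<And>x. x \<in> Q 0 \<Longrightarrow> n x \<le> M"
  shows "\<exists>x\<in>V. \<forall>k e. e > 0 \<longrightarrow> (\<exists>y\<in>Q k. n (y - x) < e)"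
proof -
  have ns: "normed_subspace V n" by (rule rb_ns[OF rb])
  define Cs where "Cs k = {x\<in>V. \<forall>e>0. \<exists>y\<in>Q k. n (y - x) < e}" for k
  have QC: "Q k \<subseteq> Cs k" for k
  proof
    fix x assume x: "x \<in> Q k"
    then have "x \<in> V" using Q(1) by blast
    then show "x \<in> Cs k" unfolding Cs_def using x ns_0[OF ns] by force
  qed
  have "\<exists>x. \<forall>k. x \<in> Cs k"
  proof (rule nested_inter[OF rb])
    fix k
    show "Cs k \<subseteq> V" unfolding Cs_def by blast
    show "Cs k \<noteq> {}" using QC[of k] Q(2)[of k] by blast
    show "Cs (Suc k) \<subseteq> Cs k" unfolding Cs_def using Q(4)[of k] by blast
    show "convex (Cs k)"
      unfolding convex_def
    proof (intro ballI allI impI)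
      fix x1 x2 and a b :: real assume x: "x1 \<in> Cs k" "x2 \<in> Cs k" and ab: "0 \<le> a" "0 \<le> b" "a + b = 1"
      have xV: "x1 \<in> V" "x2 \<in> V" using x Cs_def by auto
      show "a *\<^sub>R x1 + b *\<^sub>R x2 \<in> Cs k" unfolding Cs_def mem_Collect_eq
      proof (intro conjI allI impI)
        show "a *\<^sub>R x1 + b *\<^sub>R x2 \<in> V" using xV by (intro Va[OF ns] Vs[OF ns])
        fix e :: real assume e: "e > 0"
        have e2: "e/2 > 0" using e by simp
        have "\<forall>e>0. \<exists>y\<in>Q k. n (y - x1) < e" "\<forall>e>0. \<exists>y\<in>Q k. n (y - x2) < e" using x unfolding Cs_def by blast+
        then obtain y1 y2 where y1: "y1 \<in> Q k" "n (y1 - x1) < e/2" and y2: "y2 \<in> Q k" "n (y2 - x2) < e/2"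
          using e2 by blast
        have yV: "y1 \<in> V" "y2 \<in> V" using y1 y2 Q(1) by auto
        have "a *\<^sub>R y1 + b *\<^sub>R y2 \<in> Q k" using y1 y2 ab Q(3)[of k] by (simp add: convexD)
        moreover have "n ((a *\<^sub>R y1 + b *\<^sub>R y2) - (a *\<^sub>R x1 + b *\<^sub>R x2)) < e"
        proof -
          have eq: "(a *\<^sub>R y1 + b *\<^sub>R y2) - (a *\<^sub>R x1 + b *\<^sub>R x2) = a *\<^sub>R (y1 - x1) + b *\<^sub>R (y2 - x2)"
            by (simp add: algebra_simps)
          have "n (a *\<^sub>R (y1 - x1) + b *\<^sub>R (y2 - x2)) \<le> a * n (y1 - x1) + b * n (y2 - x2)"
            using yV xV ab by (intro ns_conv[OF ns] Vd[OF ns]) auto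
          also have "\<dots> \<le> a * (e/2) + b * (e/2)" using y1 y2 ab by (intro add_mono mult_left_mono) auto
          also have "\<dots> = e/2" using ab by (simp add: algebra_simps) (metis distrib_right mult_1)
          finally show ?thesis using e eq by simp
        qed
        ultimately show "\<exists>y\<in>Q k. n (y - (a *\<^sub>R x1 + b *\<^sub>R x2)) < e" by blast
      qed
    qed
    show "\<forall>us u. (\<forall>i. us i \<in> Cs k) \<and> u \<in> V \<and> (\<lambda>i. n (us i - u)) \<longlonglongrightarrow> 0 \<longrightarrow> u \<in> Cs k"
    proof (intro allI impI)
      fix us u assume h: "(\<forall>i. us i \<in> Cs k) \<and> u \<in> V \<and> (\<lambda>i. n (us i - u)) \<longlonglongrightarrow> 0"
      show "u \<in> Cs k" unfolding Cs_def mem_Collect_eq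
      proof (intro conjI allI impI)
        show "u \<in> V" using h by blast
        fix e :: real assume e: "e > 0"
        obtain i where i: "n (us i - u) < e/2"
        proof -
          have "\<forall>\<^sub>F i in sequentially. dist (n (us i - u)) 0 < e/2" using h e
            by (intro tendstoD) auto
          then obtain N where "\<And>i. i \<ge> N \<Longrightarrow> dist (n (us i - u)) 0 < e/2" unfolding eventually_sequentially by blast
          then have "n (us N - u) < e/2" by force
          then show ?thesis using that by blast
        qed
        have uiV: "us i \<in> V" using h Cs_def by blast
        have e2: "e/2 > 0" using e by simp
        have "\<forall>e>0. \<exists>y\<in>Q k. n (y - us i) < e" using h unfolding Cs_def by blast
        then obtain y where y: "y \<in> Q k" "n (y - us i) < e/2" using e2 by blast
        have yV: "y \<in> V" using y Q(1) by blast
        have "n (y - u) \<le> n (y - us i) + n (us i - u)" using ns_tri3[OF ns yV uiV] h by blast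
        then show "\<exists>y\<in>Q k. n (y - u) < e" using y i by (intro bexI[of _ y]) auto
      qed
    qed
  next
    fix x assume x: "x \<in> Cs 0"
    then have "\<forall>e>0. \<exists>y\<in>Q 0. n (y - x) < e" unfolding Cs_def by blast
    then obtain y where y: "y \<in> Q 0" "n (y - x) < 1" using zero_less_one by blast
    have xV: "x \<in> V" using x Cs_def by blast
    have yV: "y \<in> V" using y Q(1) by blast
    have "n (x - 0) \<le> n (x - y) + n (y - 0)" using ns_tri3[OF ns xV yV subspace_0[OF ns_sub[OF ns]]] .
    moreover have "n (x - y) = n (y - x)" using ns_sym[OF ns xV yV] .
    ultimately show "n x \<le> M + 1" using M[OF y(1)] y(2) by simp
  qed
  then obtain x where "\<And>k. x \<in> Cs k" by blast
  then show ?thesis unfolding Cs_def by blast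
qed

lemma le_of_all: fixes a b c :: real assumes "\<And>k::nat. a \<le> b + c / (real k + 1)"
  shows "a \<le> b"
proof -
  have "(\<lambda>k::nat. b + c * inverse (real (Suc k))) \<longlonglongrightarrow> b + c * 0"
    by (intro tendsto_intros LIMSEQ_inverse_real_of_nat)
  then have "(\<lambda>k::nat. b + c / (real k + 1)) \<longlonglongrightarrow> b" by (simp add: field_simps)
  then show ?thesis by (rule LIMSEQ_le_const) (use assms in auto)
qed

lemma strict_conv_eq:
  assumes ns: "normed_subspace W nW" and sc: "strictly_convex_norm W nW"
    and g: "g1 \<in> W" "g2 \<in> W" "nW g1 = m" "nW g2 = m" "m \<le> nW ((1/2) *\<^sub>R (g1 + g2))"
  shows "g1 = g2"
proof (rule ccontr)
  assume ne: "g1 \<noteq> g2"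
  have m0: "m \<ge> 0" using ns_nonneg[OF ns g(1)] g(3) by simp
  show False
  proof (cases "m = 0")
    case True
    then have "g1 = 0" "g2 = 0" using ns_zero_iff[OF ns] g by auto
    then show False using ne by simp
  next
    case False
    then have mp: "m > 0" using m0 by simp
    define x y where "x = (1/m) *\<^sub>R g1" and "y = (1/m) *\<^sub>R g2"
    have xy: "x \<in> W" "y \<in> W" using g x_def y_def Vs[OF ns] by auto
    have n1: "nW x = 1" "nW y = 1" using ns_scale[OF ns g(1), of "1/m"] ns_scale[OF ns g(2), of "1/m"] g mp x_def y_def by auto
    have "x \<noteq> y" using ne mp x_def y_def by auto
    then have lt: "nW ((1/2) *\<^sub>R (x + y)) < 1" using sc xy n1 unfolding strictly_convex_norm_def by blast
    have eq: "(1/2) *\<^sub>R (x + y) = (1/m) *\<^sub>R ((1/2) *\<^sub>R (g1 + g2))" using x_def y_def by (simp add: algebra_simps)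
    have mW: "(1/2) *\<^sub>R (g1 + g2) \<in> W" using g by (intro Vs[OF ns] Va[OF ns]) auto
    have "nW ((1/m) *\<^sub>R ((1/2) *\<^sub>R (g1 + g2))) = \<bar>1/m\<bar> * nW ((1/2) *\<^sub>R (g1 + g2))"
      by (rule ns_scale[OF ns mW])
    then have "nW ((1/2) *\<^sub>R (x + y)) = (1/m) * nW ((1/2) *\<^sub>R (g1 + g2))"
      unfolding eq using mp by simp
    then have "m * nW ((1/2) *\<^sub>R (x + y)) = nW ((1/2) *\<^sub>R (g1 + g2))" using mp by simp
    then have "m * 1 \<le> m * nW ((1/2) *\<^sub>R (x + y))" using g(5) by simp
    then have "nW ((1/2) *\<^sub>R (x + y)) \<ge> 1" using mp mult_le_cancel_left_pos by blast
    then show False using lt by simp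
  qed
qed

context
  fixes V :: "'v::real_vector set" and nV W nW and R :: "('v \<times> 'w::real_vector) set"
  assumes gs: "gradient_space V nV W nW R"
begin

lemma gs_G1: "(u,g)\<in>R \<Longrightarrow> (u',g')\<in>R \<Longrightarrow> (u+u', g+g')\<in>R"
  using gs unfolding gradient_space_def gradient_relation_def by blast
lemma gs_G2: "(u,g)\<in>R \<Longrightarrow> \<alpha> > 0 \<Longrightarrow> (\<alpha> *\<^sub>R u, \<alpha> *\<^sub>R g)\<in>R"
  using gs unfolding gradient_space_def gradient_relation_def by blast
lemma gs_rbV: "reflexive_banach V nV" using gs unfolding gradient_space_def by blast
lemma gs_rbW: "reflexive_banach W nW" using gs unfolding gradient_space_def by blast
lemma gs_nsV: "normed_subspace V nV" using rb_ns[OF gs_rbV] .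
lemma gs_nsW: "normed_subspace W nW" using rb_ns[OF gs_rbW] .
lemma gs_sc: "strictly_convex_norm W nW" using gs unfolding gradient_space_def by blast
lemma gs_GS3: "u\<in>V \<Longrightarrow> g\<in>W \<Longrightarrow> (u,g)\<in>R \<Longrightarrow> \<exists>g'\<in>W. (-u,g')\<in>R"
  using gs unfolding gradient_space_def by blast
lemma gs_GS4: "u\<in>V \<Longrightarrow> g\<in>W \<Longrightarrow> (\<And>i. us i \<in> V) \<Longrightarrow> (\<And>i. gs i \<in> W) \<Longrightarrow> (\<And>i. (us i, gs i) \<in> R)
  \<Longrightarrow> (\<lambda>i. nV (u - us i)) \<longlonglongrightarrow> 0 \<Longrightarrow> (\<lambda>i. nW (g - gs i)) \<longlonglongrightarrow> 0 \<Longrightarrow> (u,g)\<in>R"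
proof -
  have "\<forall>u\<in>V. \<forall>g\<in>W. \<forall>us gs. (\<forall>i. us i \<in> V \<and> gs i \<in> W \<and> (us i, gs i) \<in> R) \<and>
        (\<lambda>i. nV (u - us i)) \<longlonglongrightarrow> 0 \<and> (\<lambda>i. nW (g - gs i)) \<longlonglongrightarrow> 0
        \<longrightarrow> (u, g) \<in> R" using gs unfolding gradient_space_def by (elim conjE)
  then show "u\<in>V \<Longrightarrow> g\<in>W \<Longrightarrow> (\<And>i. us i \<in> V) \<Longrightarrow> (\<And>i. gs i \<in> W) \<Longrightarrow> (\<And>i. (us i, gs i) \<in> R)
  \<Longrightarrow> (\<lambda>i. nV (u - us i)) \<longlonglongrightarrow> 0 \<Longrightarrow> (\<lambda>i. nW (g - gs i)) \<longlonglongrightarrow> 0 \<Longrightarrow> (u,g)\<in>R" by blast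
qed

lemma Rconv: "(u1,g1)\<in>R \<Longrightarrow> (u2,g2)\<in>R \<Longrightarrow> a \<ge> 0 \<Longrightarrow> b \<ge> 0 \<Longrightarrow> a + b = 1 \<Longrightarrow>
   (a *\<^sub>R u1 + b *\<^sub>R u2, a *\<^sub>R g1 + b *\<^sub>R g2) \<in> R"
proof -
  assume h: "(u1,g1)\<in>R" "(u2,g2)\<in>R" "a \<ge> 0" "b \<ge> 0" "a + b = 1"
  show ?thesis
  proof (cases "a = 0")
    case True then show ?thesis using h by simp
  next
    case a: False
    show ?thesis
    proof (cases "b = 0")
      case True then show ?thesis using h by simp
    next
      case False
      then show ?thesis using h a by (intro gs_G1 gs_G2) auto
    qed
  qed
qed

lemma min_grad_prop:
  assumes u: "u \<in> Sob V W R"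
  shows "min_grad W nW R u \<in> W \<and> (u, min_grad W nW R u) \<in> R \<and>
         (\<forall>g'\<in>W. (u, g') \<in> R \<longrightarrow> nW (min_grad W nW R u) \<le> nW g')"
proof -
  have nsW: "normed_subspace W nW" by (rule gs_nsW)
  have nsV: "normed_subspace V nV" by (rule gs_nsV)
  have uV: "u \<in> V" using u unfolding Sob_def by blast
  define G where "G = {g\<in>W. (u,g)\<in>R}"
  have Gne: "G \<noteq> {}" using u unfolding Sob_def G_def by blast
  define m where "m = Inf (nW ` G)"
  have bdd: "bdd_below (nW ` G)" by (rule bdd_belowI[of _ 0]) (auto simp: G_def intro: ns_nonneg[OF nsW])
  have m_le: "m \<le> nW g" if "g \<in> G" for g unfolding m_def using bdd that by (simp add: cInf_lower)
  have m_app: "\<exists>g\<in>G. nW g < m + e" if "e > 0" for e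
  proof (rule ccontr)
    assume "\<not> ?thesis"
    then have "m + e \<le> Inf (nW ` G)" using Gne by (intro cInf_greatest) auto
    then show False using that m_def by simp
  qed
  have Gconv: "a *\<^sub>R g1 + b *\<^sub>R g2 \<in> G" if "g1\<in>G" "g2\<in>G" "a\<ge>0" "b\<ge>0" "a+b=1" for g1 g2 a b
  proof -
    have "(u,g1) \<in> R" "(u,g2) \<in> R" using that(1,2) unfolding G_def by auto
    then have "(a *\<^sub>R u + b *\<^sub>R u, a *\<^sub>R g1 + b *\<^sub>R g2) \<in> R" using that(3-5) by (rule Rconv)
    moreover have "a *\<^sub>R u + b *\<^sub>R u = u" using that(5) by (metis scaleR_add_left scaleR_one)
    moreover have "g1 \<in> W" "g2 \<in> W" using that(1,2) unfolding G_def by auto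
    then have "a *\<^sub>R g1 + b *\<^sub>R g2 \<in> W" by (intro Va[OF nsW] Vs[OF nsW])
    ultimately show ?thesis unfolding G_def by simp
  qed
  define Q where "Q k = {g\<in>G. nW g \<le> m + 1/(real k + 1)}" for k
  have "\<exists>x\<in>W. \<forall>k e. e > 0 \<longrightarrow> (\<exists>y\<in>Q k. nW (y - x) < e)"
  proof (rule eps_inter[OF gs_rbW])
    fix k
    show "Q k \<subseteq> W" unfolding Q_def G_def by blast
    show "Q k \<noteq> {}" using m_app[of "1/(real k + 1)"] unfolding Q_def by force
    have "1/(real (Suc k) + 1) \<le> 1/(real k + 1)" by (intro divide_left_mono) auto
    then show "Q (Suc k) \<subseteq> Q k" unfolding Q_def by force
    show "convex (Q k)" unfolding convex_def
    proof (intro ballI allI impI)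
      fix g1 g2 and a b :: real assume h: "g1 \<in> Q k" "g2 \<in> Q k" "0 \<le> a" "0 \<le> b" "a + b = 1"
      have gW: "g1 \<in> W" "g2 \<in> W" using h Q_def G_def by auto
      have "nW (a *\<^sub>R g1 + b *\<^sub>R g2) \<le> a * nW g1 + b * nW g2" using ns_conv[OF nsW gW] h by blast
      also have "\<dots> \<le> a * (m + 1/(real k + 1)) + b * (m + 1/(real k + 1))"
        using h Q_def by (intro add_mono mult_left_mono) auto
      also have "\<dots> = m + 1/(real k + 1)" using h(5) by (metis distrib_right mult_1)
      finally show "a *\<^sub>R g1 + b *\<^sub>R g2 \<in> Q k" using Gconv[of g1 g2 a b] h Q_def by auto
    qed
  next
    fix x assume "x \<in> Q 0" then show "nW x \<le> m + 1" unfolding Q_def by simp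
  qed
  then obtain gs where gsW: "gs \<in> W" and gsa: "\<And>k e. e > 0 \<Longrightarrow> \<exists>y\<in>Q k. nW (y - gs) < e" by blast
  have "\<forall>k. \<exists>y. y \<in> Q k \<and> nW (y - gs) < 1/(real k + 1)"
  proof
    fix k :: nat have "1/(real k + 1) > 0" by simp
    then show "\<exists>y. y \<in> Q k \<and> nW (y - gs) < 1/(real k + 1)" using gsa by blast
  qed
  then have "\<exists>ys. \<forall>k. ys k \<in> Q k \<and> nW (ys k - gs) < 1/(real k + 1)" by (rule choice)
  then obtain ys where ys: "\<And>k. ys k \<in> Q k \<and> nW (ys k - gs) < 1/(real k + 1)" by blast
  have ysW: "ys k \<in> W" for k using ys[of k] unfolding Q_def G_def by blast
  have ysR: "(u, ys k) \<in> R" for k using ys[of k] unfolding Q_def G_def by blast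
  have conv: "(\<lambda>i. nW (gs - ys i)) \<longlonglongrightarrow> 0"
  proof (rule seq0)
    fix k
    show "0 \<le> nW (gs - ys k)" using ns_nonneg[OF nsW] Vd[OF nsW gsW ysW] .
    show "nW (gs - ys k) \<le> 1/(real k + 1)" using ys[of k] ns_sym[OF nsW gsW ysW[of k]] by simp
  qed
  have c0: "(\<lambda>i. nV (u - u)) \<longlonglongrightarrow> 0" using ns_0[OF nsV] by simp
  have "(u, gs) \<in> R"
    by (rule gs_GS4[OF uV gsW, of "\<lambda>i. u" ys, OF uV ysW ysR c0 conv])
  then have gsG: "gs \<in> G" using gsW unfolding G_def by blast
  have "nW gs \<le> m + 2 / (real k + 1)" for k
  proof -
    have "nW (gs - 0) \<le> nW (gs - ys k) + nW (ys k - 0)" using ns_tri3[OF nsW gsW ysW subspace_0[OF ns_sub[OF nsW]]] .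
    moreover have "nW (gs - ys k) \<le> 1/(real k + 1)" using ys[of k] ns_sym[OF nsW gsW ysW[of k]] by simp
    moreover have "nW (ys k) \<le> m + 1/(real k + 1)" using ys[of k] unfolding Q_def by simp
    moreover have "2 / (real k + 1) = 1/(real k + 1) + 1/(real k + 1)" by (simp add: field_simps)
    ultimately show ?thesis by simp
  qed
  then have gsm: "nW gs \<le> m" by (rule le_of_all)
  have P: "gs \<in> W \<and> (u, gs) \<in> R \<and> (\<forall>g'\<in>W. (u, g') \<in> R \<longrightarrow> nW gs \<le> nW g')"
  proof (intro conjI ballI impI)
    show "gs \<in> W" by (rule gsW)
    show "(u, gs) \<in> R" using gsG unfolding G_def by blast
    fix g' assume "g' \<in> W" "(u, g') \<in> R"
    then have "g' \<in> G" unfolding G_def by blast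
    then have "m \<le> nW g'" by (rule m_le)
    then show "nW gs \<le> nW g'" using gsm by linarith
  qed
  have uniq: "g = gs" if "g \<in> W \<and> (u, g) \<in> R \<and> (\<forall>g'\<in>W. (u, g') \<in> R \<longrightarrow> nW g \<le> nW g')" for g
  proof -
    have e1: "nW g \<le> nW gs" using that P by blast
    have e2: "nW gs \<le> nW g" using that P by blast
    have e: "nW g = nW gs" using e1 e2 by linarith
    have gG: "g \<in> G" using that unfolding G_def by blast
    have "(1/2) *\<^sub>R g + (1/2) *\<^sub>R gs \<in> G" using gG gsG by (intro Gconv) auto
    then have "(1/2) *\<^sub>R g + (1/2) *\<^sub>R gs \<in> W" "(u, (1/2) *\<^sub>R g + (1/2) *\<^sub>R gs) \<in> R" unfolding G_def by auto
    then have "nW g \<le> nW ((1/2) *\<^sub>R g + (1/2) *\<^sub>R gs)" using that by blast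
    then have "nW g \<le> nW ((1/2) *\<^sub>R (g + gs))" by (simp add: scaleR_add_right)
    moreover have "g \<in> W" using that by blast
    ultimately show ?thesis using strict_conv_eq[OF nsW gs_sc _ gsW refl e[symmetric]] by blast
  qed
  have "min_grad W nW R u = gs" unfolding min_grad_def
  proof (rule the_equality)
    show "gs \<in> W \<and> (u, gs) \<in> R \<and> (\<forall>g'\<in>W. (u, g') \<in> R \<longrightarrow> nW gs \<le> nW g')" by (rule P)
    fix g assume "g \<in> W \<and> (u, g) \<in> R \<and> (\<forall>g'\<in>W. (u, g') \<in> R \<longrightarrow> nW g \<le> nW g')"
    then show "g = gs" by (rule uniq)
  qed
  then show ?thesis using P by simp
qed

end




theorem mainTheorem9:
  fixes V :: "'v::real_vector set" and nV :: "'v \<Rightarrow> real"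
    and W :: "'w::real_vector set" and nW :: "'w \<Rightarrow> real"
    and R :: "('v \<times> 'w) set" and le :: "'v \<Rightarrow> 'v \<Rightarrow> bool"
    and K0 :: "'v set" and f \<psi> :: 'v
  assumes pgs: "preordered_gradient_space V nV W nW R le"
    and K0_convex: "convex K0"
    and K0_poincare: "poincare_set V nV W nW R K0"
    and K0_closed: "\<forall>us u. (\<forall>i. us i \<in> K0) \<and> u \<in> V \<and> (\<lambda>i. nV (us i - u)) \<longlonglongrightarrow> 0 \<longrightarrow> u \<in> K0"
    and f_Sob: "f \<in> Sob V W R"
    and K_def: "K = {u \<in> Sob V W R. u - f \<in> K0 \<and> le \<psi> u}"
    and K_ne: "K \<noteq> {}"
  shows "(\<exists>u\<in>K. nW (min_grad W nW R u) = (INF v\<in>K. nW (min_grad W nW R v)))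
    \<and> (\<forall>u1\<in>K. \<forall>u2\<in>K.
          nW (min_grad W nW R u1) = (INF v\<in>K. nW (min_grad W nW R v)) \<and>
          nW (min_grad W nW R u2) = (INF v\<in>K. nW (min_grad W nW R v))
          \<longrightarrow> min_grad W nW R u1 = min_grad W nW R u2)
    \<and> (subspace K0 \<and>
       (\<forall>u\<in>Sob V W R. \<forall>v\<in>Sob V W R.
          min_grad W nW R (u + v) = min_grad W nW R u + min_grad W nW R v) \<and>
       (\<forall>c. \<forall>u\<in>Sob V W R. min_grad W nW R (c *\<^sub>R u) = c *\<^sub>R min_grad W nW R u)
       \<longrightarrow> (\<forall>u1\<in>K. \<forall>u2\<in>K.
          nW (min_grad W nW R u1) = (INF v\<in>K. nW (min_grad W nW R v)) \<and>
          nW (min_grad W nW R u2) = (INF v\<in>K. nW (min_grad W nW R v))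
          \<longrightarrow> u1 = u2))"
proof -
  let ?g = "min_grad W nW R"
  have pg: "gradient_space V nV W nW R \<and> linear_preorder le \<and>
     (\<forall>us u \<psi>. (\<forall>i. us i \<in> V \<and> le (us i) \<psi>) \<and> u \<in> V \<and> (\<lambda>i. nV (us i - u)) \<longlonglongrightarrow> 0
        \<longrightarrow> le u \<psi>)" using pgs unfolding preordered_gradient_space_def .
  have gs: "gradient_space V nV W nW R" using pg by (rule conjunct1)
  have lp: "linear_preorder le" using pg by blast
  have lecl: "\<forall>us u \<psi>. (\<forall>i. us i \<in> V \<and> le (us i) \<psi>) \<and> u \<in> V \<and> (\<lambda>i. nV (us i - u)) \<longlonglongrightarrow> 0
        \<longrightarrow> le u \<psi>" using pg by blast
  have nsV: "normed_subspace V nV" by (rule gs_nsV[OF gs])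
  have nsW: "normed_subspace W nW" by (rule gs_nsW[OF gs])
  have le_trans: "\<And>a b c. le a b \<Longrightarrow> le b c \<Longrightarrow> le a c" using lp unfolding linear_preorder_def by blast
  have le_add: "\<And>a b c. le b c \<Longrightarrow> le (a + b) (a + c)" using lp unfolding linear_preorder_def by blast
  have le_scale: "\<And>a b \<alpha>. le a b \<Longrightarrow> \<alpha> \<ge> 0 \<Longrightarrow> le (\<alpha> *\<^sub>R a) (\<alpha> *\<^sub>R b)" using lp unfolding linear_preorder_def by blast
  have le_neg: "le (-b) (-a)" if "le a b" for a b
  proof -
    have "le ((-a-b) + a) ((-a-b) + b)" by (rule le_add[OF that])
    then show ?thesis by simp
  qed
  have lecomb: "le \<psi> (a *\<^sub>R u1 + b *\<^sub>R u2)" if h: "le \<psi> u1" "le \<psi> u2" "a \<ge> 0" "b \<ge> 0" "a + b = 1" for u1 u2 a b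
  proof -
    have h1: "le (a *\<^sub>R \<psi>) (a *\<^sub>R u1)" by (rule le_scale[OF h(1) h(3)])
    have h2: "le (b *\<^sub>R \<psi>) (b *\<^sub>R u2)" by (rule le_scale[OF h(2) h(4)])
    have h3: "le (a *\<^sub>R \<psi> + b *\<^sub>R \<psi>) (a *\<^sub>R \<psi> + b *\<^sub>R u2)" by (rule le_add[OF h2])
    have h4: "le (b *\<^sub>R u2 + a *\<^sub>R \<psi>) (b *\<^sub>R u2 + a *\<^sub>R u1)" by (rule le_add[OF h1])
    then have h4': "le (a *\<^sub>R \<psi> + b *\<^sub>R u2) (a *\<^sub>R u1 + b *\<^sub>R u2)" by (simp add: add.commute)
    have "a *\<^sub>R \<psi> + b *\<^sub>R \<psi> = \<psi>" using h(5) by (metis scaleR_add_left scaleR_one)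
    then show ?thesis using le_trans[OF h3 h4'] by simp
  qed
  have leclosed: "le \<psi> u" if h: "\<And>i. us i \<in> V" "\<And>i. le \<psi> (us i)" "u \<in> V" "(\<lambda>i. nV (us i - u)) \<longlonglongrightarrow> 0" for us u
  proof -
    have "(\<lambda>i. nV (- us i - - u)) = (\<lambda>i. nV (us i - u))"
    proof (rule ext)
      fix i
      have "us i - u \<in> V" using h by (intro Vd[OF nsV]) auto
      then have "nV (- (us i - u)) = nV (us i - u)" by (rule ns_minus[OF nsV])
      then show "nV (- us i - - u) = nV (us i - u)" by simp
    qed
    then have c: "(\<lambda>i. nV (- us i - - u)) \<longlonglongrightarrow> 0" using h(4) by simp
    have "\<forall>i. - us i \<in> V \<and> le (- us i) (- \<psi>)" using h(1,2) le_neg Vn[OF nsV] by blast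
    moreover have "- u \<in> V" using h(3) by (rule Vn[OF nsV])
    ultimately have "le (- u) (- \<psi>)" using c by (intro lecl[rule_format, of "\<lambda>i. - us i" "- \<psi>" "- u"]) blast
    then have "le (- (- \<psi>)) (- (- u))" by (rule le_neg)
    then show ?thesis by simp
  qed
  obtain Cp where Cp: "Cp > 0" "\<And>u g. u \<in> K0 \<Longrightarrow> g \<in> W \<Longrightarrow> (u, g) \<in> R \<Longrightarrow> nV u \<le> Cp * nW g"
    using K0_poincare unfolding poincare_set_def by blast
  have K0Sob: "K0 \<subseteq> Sob V W R" using K0_poincare unfolding poincare_set_def by blast
  have fV: "f \<in> V" using f_Sob unfolding Sob_def by blast
  obtain gf where gf: "gf \<in> W" "(f, gf) \<in> R" using f_Sob unfolding Sob_def by blast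
  obtain gf' where gf': "gf' \<in> W" "(- f, gf') \<in> R" using gs_GS3[OF gs fV gf] by blast
  have Kiff: "u \<in> K \<longleftrightarrow> u \<in> Sob V W R \<and> u - f \<in> K0 \<and> le \<psi> u" for u unfolding K_def by simp
  have KV: "u \<in> V" if "u \<in> K" for u using that unfolding Kiff Sob_def by blast
  have mgK: "?g u \<in> W \<and> (u, ?g u) \<in> R \<and> (\<forall>g'\<in>W. (u, g') \<in> R \<longrightarrow> nW (?g u) \<le> nW g')" if "u \<in> K" for u
    using min_grad_prop[OF gs] that unfolding Kiff by blast
  have Kconv: "a *\<^sub>R u1 + b *\<^sub>R u2 \<in> K" if h: "u1 \<in> K" "u2 \<in> K" "a \<ge> 0" "b \<ge> 0" "a + b = 1" for u1 u2 a b
  proof -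
    have uV: "u1 \<in> V" "u2 \<in> V" using h KV by auto
    have g1: "?g u1 \<in> W" "(u1, ?g u1) \<in> R" using mgK[OF h(1)] by auto
    have g2: "?g u2 \<in> W" "(u2, ?g u2) \<in> R" using mgK[OF h(2)] by auto
    have "(a *\<^sub>R u1 + b *\<^sub>R u2, a *\<^sub>R ?g u1 + b *\<^sub>R ?g u2) \<in> R" by (rule Rconv[OF gs g1(2) g2(2) h(3-5)])
    moreover have "a *\<^sub>R ?g u1 + b *\<^sub>R ?g u2 \<in> W" using g1 g2 by (intro Va[OF nsW] Vs[OF nsW])
    moreover have "a *\<^sub>R u1 + b *\<^sub>R u2 \<in> V" using uV by (intro Va[OF nsV] Vs[OF nsV])
    ultimately have sob: "a *\<^sub>R u1 + b *\<^sub>R u2 \<in> Sob V W R" unfolding Sob_def by blast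
    have ff: "a *\<^sub>R f + b *\<^sub>R f = f" using h(5) by (metis scaleR_add_left scaleR_one)
    have "a *\<^sub>R (u1 - f) + b *\<^sub>R (u2 - f) = (a *\<^sub>R u1 + b *\<^sub>R u2) - (a *\<^sub>R f + b *\<^sub>R f)"
      by (simp add: algebra_simps)
    then have eq: "a *\<^sub>R (u1 - f) + b *\<^sub>R (u2 - f) = (a *\<^sub>R u1 + b *\<^sub>R u2) - f" using ff by simp
    have "u1 - f \<in> K0" "u2 - f \<in> K0" using h(1,2) unfolding Kiff by auto
    then have "a *\<^sub>R (u1 - f) + b *\<^sub>R (u2 - f) \<in> K0" using h(3-5) by (intro convexD[OF K0_convex])
    then have k0: "(a *\<^sub>R u1 + b *\<^sub>R u2) - f \<in> K0" using eq by simp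
    have "le \<psi> u1" "le \<psi> u2" using h(1,2) unfolding Kiff by auto
    then have "le \<psi> (a *\<^sub>R u1 + b *\<^sub>R u2)" using h(3-5) by (intro lecomb)
    then show ?thesis using sob k0 unfolding Kiff by blast
  qed
  have Kbnd: "nV u \<le> nV f + Cp * (nW g + nW gf')" if h: "u \<in> K" "g \<in> W" "(u, g) \<in> R" for u g
  proof -
    have uV: "u \<in> V" by (rule KV[OF h(1)])
    have "(u + - f, g + gf') \<in> R" by (rule gs_G1[OF gs h(3) gf'(2)])
    then have r: "(u - f, g + gf') \<in> R" by simp
    have k: "u - f \<in> K0" using h(1) unfolding Kiff by blast
    have gw: "g + gf' \<in> W" using h(2) gf'(1) by (rule Va[OF nsW])
    have "nV (u - f) \<le> Cp * nW (g + gf')" by (rule Cp(2)[OF k gw r])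
    also have "\<dots> \<le> Cp * (nW g + nW gf')" using ns_tri[OF nsW h(2) gf'(1)] Cp(1) by (simp add: mult_left_mono)
    finally have a: "nV (u - f) \<le> Cp * (nW g + nW gf')" .
    have "nV ((u - f) + f) \<le> nV (u - f) + nV f" using Vd[OF nsV uV fV] fV by (rule ns_tri[OF nsV])
    then show ?thesis using a by simp
  qed
  define m where "m = (INF v\<in>K. nW (?g v))"
  have bdd: "bdd_below ((\<lambda>v. nW (?g v)) ` K)"
  proof (rule bdd_belowI2)
    fix v assume "v \<in> K" then show "0 \<le> nW (?g v)" using mgK ns_nonneg[OF nsW] by blast
  qed
  have m_le: "m \<le> nW (?g v)" if "v \<in> K" for v unfolding m_def by (rule cINF_lower[OF bdd that])
  have m_app: "\<exists>v\<in>K. nW (?g v) < m + e" if e: "e > 0" for e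
  proof (rule ccontr)
    assume "\<not> ?thesis"
    then have "\<And>v. v \<in> K \<Longrightarrow> m + e \<le> nW (?g v)" by (meson not_less)
    then have "m + e \<le> m" unfolding m_def by (rule cINF_greatest[OF K_ne])
    then show False using e by simp
  qed
  have inv_mono: "1/(real (Suc k) + 1) \<le> 1/(real k + 1)" for k :: nat by (intro divide_left_mono) auto
  define P where "P k = {u\<in>K. \<exists>g\<in>W. (u, g) \<in> R \<and> nW g \<le> m + 1/(real k + 1)}" for k :: nat
  have "\<exists>x\<in>V. \<forall>k e. e > 0 \<longrightarrow> (\<exists>y\<in>P k. nV (y - x) < e)"
  proof (rule eps_inter[OF gs_rbV[OF gs]])
    fix k
    show "P k \<subseteq> V" unfolding P_def using KV by blast
    show "P k \<noteq> {}"
    proof -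
      have "1/(real k + 1) > 0" by simp
      then obtain v where v: "v \<in> K" "nW (?g v) < m + 1/(real k + 1)" using m_app by blast
      then have "v \<in> P k" unfolding P_def using mgK[OF v(1)] by force
      then show ?thesis by blast
    qed
    show "P (Suc k) \<subseteq> P k" unfolding P_def using inv_mono[of k] by force
    show "convex (P k)" unfolding convex_def
    proof (intro ballI allI impI)
      fix u1 u2 and a b :: real assume h: "u1 \<in> P k" "u2 \<in> P k" "0 \<le> a" "0 \<le> b" "a + b = 1"
      from h(1) obtain g1 where g1: "u1 \<in> K" "g1 \<in> W" "(u1, g1) \<in> R" "nW g1 \<le> m + 1/(real k + 1)"
        unfolding P_def by blast
      from h(2) obtain g2 where g2: "u2 \<in> K" "g2 \<in> W" "(u2, g2) \<in> R" "nW g2 \<le> m + 1/(real k + 1)"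
        unfolding P_def by blast
      have r: "(a *\<^sub>R u1 + b *\<^sub>R u2, a *\<^sub>R g1 + b *\<^sub>R g2) \<in> R" by (rule Rconv[OF gs g1(3) g2(3) h(3-5)])
      have w: "a *\<^sub>R g1 + b *\<^sub>R g2 \<in> W" using g1 g2 by (intro Va[OF nsW] Vs[OF nsW])
      have "nW (a *\<^sub>R g1 + b *\<^sub>R g2) \<le> a * nW g1 + b * nW g2" by (rule ns_conv[OF nsW g1(2) g2(2) h(3,4)])
      also have "\<dots> \<le> a * (m + 1/(real k + 1)) + b * (m + 1/(real k + 1))"
        using h g1 g2 by (intro add_mono mult_left_mono) auto
      also have "\<dots> = m + 1/(real k + 1)" using h(5) by (metis distrib_right mult_1)
      finally have "nW (a *\<^sub>R g1 + b *\<^sub>R g2) \<le> m + 1/(real k + 1)" .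
      moreover have "a *\<^sub>R u1 + b *\<^sub>R u2 \<in> K" by (rule Kconv[OF g1(1) g2(1) h(3-5)])
      ultimately show "a *\<^sub>R u1 + b *\<^sub>R u2 \<in> P k" unfolding P_def using r w by blast
    qed
  next
    fix x assume "x \<in> P 0"
    then obtain g where g: "x \<in> K" "g \<in> W" "(x, g) \<in> R" "nW g \<le> m + 1" unfolding P_def by auto
    have "nV x \<le> nV f + Cp * (nW g + nW gf')" by (rule Kbnd[OF g(1-3)])
    also have "\<dots> \<le> nV f + Cp * (m + 1 + nW gf')" using g(4) Cp(1) by (simp add: mult_left_mono)
    finally show "nV x \<le> nV f + Cp * (m + 1 + nW gf')" .
  qed
  then obtain us where usV: "us \<in> V" and usa: "\<And>k e. e > 0 \<Longrightarrow> \<exists>y\<in>P k. nV (y - us) < e" by blast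
  define Q where "Q k = {g\<in>W. \<exists>v\<in>K. (v, g) \<in> R \<and> nW g \<le> m + 1/(real k + 1) \<and> nV (v - us) \<le> 1/(real k + 1)}" for k :: nat
  have "\<exists>x\<in>W. \<forall>k e. e > 0 \<longrightarrow> (\<exists>y\<in>Q k. nW (y - x) < e)"
  proof (rule eps_inter[OF gs_rbW[OF gs]])
    fix k
    show "Q k \<subseteq> W" unfolding Q_def by blast
    show "Q k \<noteq> {}"
    proof -
      have "1/(real k + 1) > 0" by simp
      then obtain v where v: "v \<in> P k" "nV (v - us) < 1/(real k + 1)" using usa by blast
      from v(1) obtain g where g: "v \<in> K" "g \<in> W" "(v, g) \<in> R" "nW g \<le> m + 1/(real k + 1)"
        unfolding P_def by blast
      have "g \<in> Q k" unfolding Q_def using g v(2) by force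
      then show ?thesis by blast
    qed
    show "Q (Suc k) \<subseteq> Q k" unfolding Q_def using inv_mono[of k] by force
    show "convex (Q k)" unfolding convex_def
    proof (intro ballI allI impI)
      fix g1 g2 and a b :: real assume h: "g1 \<in> Q k" "g2 \<in> Q k" "0 \<le> a" "0 \<le> b" "a + b = 1"
      from h(1) obtain v1 where v1: "g1 \<in> W" "v1 \<in> K" "(v1, g1) \<in> R" "nW g1 \<le> m + 1/(real k + 1)" "nV (v1 - us) \<le> 1/(real k + 1)"
        unfolding Q_def by blast
      from h(2) obtain v2 where v2: "g2 \<in> W" "v2 \<in> K" "(v2, g2) \<in> R" "nW g2 \<le> m + 1/(real k + 1)" "nV (v2 - us) \<le> 1/(real k + 1)"
        unfolding Q_def by blast
      have r: "(a *\<^sub>R v1 + b *\<^sub>R v2, a *\<^sub>R g1 + b *\<^sub>R g2) \<in> R" by (rule Rconv[OF gs v1(3) v2(3) h(3-5)])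
      have w: "a *\<^sub>R g1 + b *\<^sub>R g2 \<in> W" using v1 v2 by (intro Va[OF nsW] Vs[OF nsW])
      have "nW (a *\<^sub>R g1 + b *\<^sub>R g2) \<le> a * nW g1 + b * nW g2" by (rule ns_conv[OF nsW v1(1) v2(1) h(3,4)])
      also have "\<dots> \<le> a * (m + 1/(real k + 1)) + b * (m + 1/(real k + 1))"
        using h v1 v2 by (intro add_mono mult_left_mono) auto
      also have "\<dots> = m + 1/(real k + 1)" using h(5) by (metis distrib_right mult_1)
      finally have n1: "nW (a *\<^sub>R g1 + b *\<^sub>R g2) \<le> m + 1/(real k + 1)" .
      have vV: "v1 - us \<in> V" "v2 - us \<in> V" using KV v1(2) KV v2(2) usV by (auto intro: Vd[OF nsV])
      have uu: "a *\<^sub>R us + b *\<^sub>R us = us" using h(5) by (metis scaleR_add_left scaleR_one)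
      have "a *\<^sub>R (v1 - us) + b *\<^sub>R (v2 - us) = (a *\<^sub>R v1 + b *\<^sub>R v2) - (a *\<^sub>R us + b *\<^sub>R us)"
        by (simp add: algebra_simps)
      then have eq: "(a *\<^sub>R v1 + b *\<^sub>R v2) - us = a *\<^sub>R (v1 - us) + b *\<^sub>R (v2 - us)" using uu by simp
      have "nV (a *\<^sub>R (v1 - us) + b *\<^sub>R (v2 - us)) \<le> a * nV (v1 - us) + b * nV (v2 - us)"
        by (rule ns_conv[OF nsV vV h(3,4)])
      also have "\<dots> \<le> a * (1/(real k + 1)) + b * (1/(real k + 1))"
        using h v1 v2 by (intro add_mono mult_left_mono) auto
      also have "\<dots> = 1/(real k + 1)" using h(5) by (metis distrib_right mult_1)
      finally have n2: "nV ((a *\<^sub>R v1 + b *\<^sub>R v2) - us) \<le> 1/(real k + 1)" using eq by simp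
      have "a *\<^sub>R v1 + b *\<^sub>R v2 \<in> K" by (rule Kconv[OF v1(2) v2(2) h(3-5)])
      then show "a *\<^sub>R g1 + b *\<^sub>R g2 \<in> Q k" unfolding Q_def using r w n1 n2 by blast
    qed
  next
    fix x assume "x \<in> Q 0"
    then show "nW x \<le> m + 1" unfolding Q_def by auto
  qed
  then obtain gst where gstW: "gst \<in> W" and gsta: "\<And>k e. e > 0 \<Longrightarrow> \<exists>y\<in>Q k. nW (y - gst) < e" by blast
  have "\<forall>k. \<exists>y. y \<in> Q k \<and> nW (y - gst) < 1/(real k + 1)"
  proof
    fix k :: nat have "1/(real k + 1) > 0" by simp
    then show "\<exists>y. y \<in> Q k \<and> nW (y - gst) < 1/(real k + 1)" using gsta by blast
  qed
  then have "\<exists>ys. \<forall>k. ys k \<in> Q k \<and> nW (ys k - gst) < 1/(real k + 1)" by (rule choice)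
  then obtain ys where ys: "\<And>k. ys k \<in> Q k" "\<And>k. nW (ys k - gst) < 1/(real k + 1)" by blast
  have "\<forall>k. \<exists>v. v \<in> K \<and> (v, ys k) \<in> R \<and> nW (ys k) \<le> m + 1/(real k + 1) \<and> nV (v - us) \<le> 1/(real k + 1)"
    using ys(1) unfolding Q_def by blast
  then have "\<exists>vs. \<forall>k. vs k \<in> K \<and> (vs k, ys k) \<in> R \<and> nW (ys k) \<le> m + 1/(real k + 1) \<and> nV (vs k - us) \<le> 1/(real k + 1)"
    by (rule choice)
  then obtain vs where vs: "\<And>k. vs k \<in> K" "\<And>k. (vs k, ys k) \<in> R" "\<And>k. nW (ys k) \<le> m + 1/(real k + 1)"
    "\<And>k. nV (vs k - us) \<le> 1/(real k + 1)" by blast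
  have ysW: "ys k \<in> W" for k using ys(1)[of k] unfolding Q_def by blast
  have vsV: "vs k \<in> V" for k by (rule KV[OF vs(1)])
  have cV: "(\<lambda>i. nV (us - vs i)) \<longlonglongrightarrow> 0"
  proof (rule seq0)
    fix k
    show "0 \<le> nV (us - vs k)" by (rule ns_nonneg[OF nsV Vd[OF nsV usV vsV]])
    show "nV (us - vs k) \<le> 1/(real k + 1)" using vs(4)[of k] ns_sym[OF nsV usV vsV[of k]] by simp
  qed
  have cV': "(\<lambda>i. nV (vs i - us)) \<longlonglongrightarrow> 0"
  proof (rule seq0)
    fix k
    show "0 \<le> nV (vs k - us)" by (rule ns_nonneg[OF nsV Vd[OF nsV vsV usV]])
    show "nV (vs k - us) \<le> 1/(real k + 1)" by (rule vs(4))
  qed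
  have cW: "(\<lambda>i. nW (gst - ys i)) \<longlonglongrightarrow> 0"
  proof (rule seq0)
    fix k
    show "0 \<le> nW (gst - ys k)" by (rule ns_nonneg[OF nsW Vd[OF nsW gstW ysW]])
    show "nW (gst - ys k) \<le> 1/(real k + 1)" using ys(2)[of k] ns_sym[OF nsW gstW ysW[of k]] by simp
  qed
  have Rst: "(us, gst) \<in> R" by (rule gs_GS4[OF gs usV gstW vsV ysW vs(2) cV cW])
  have usSob: "us \<in> Sob V W R" unfolding Sob_def using usV gstW Rst by blast
  have usK0: "us - f \<in> K0"
  proof -
    have "\<forall>i. vs i - f \<in> K0" using vs(1) unfolding Kiff by blast
    moreover have "us - f \<in> V" by (rule Vd[OF nsV usV fV])
    moreover have "(\<lambda>i. nV ((vs i - f) - (us - f))) \<longlonglongrightarrow> 0" using cV' by simp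
    ultimately show ?thesis by (intro K0_closed[rule_format, of "\<lambda>i. vs i - f" "us - f"]) blast
  qed
  have usle: "le \<psi> us"
  proof (rule leclosed[of vs])
    fix i show "vs i \<in> V" by (rule vsV)
    show "le \<psi> (vs i)" using vs(1)[of i] unfolding Kiff by blast
  qed (use usV cV' in auto)
  have usK: "us \<in> K" unfolding Kiff using usSob usK0 usle by blast
  have "nW gst \<le> m + 2 / (real k + 1)" for k
  proof -
    have "nW (gst - 0) \<le> nW (gst - ys k) + nW (ys k - 0)"
      by (rule ns_tri3[OF nsW gstW ysW subspace_0[OF ns_sub[OF nsW]]])
    moreover have "nW (gst - ys k) \<le> 1/(real k + 1)" using ys(2)[of k] ns_sym[OF nsW gstW ysW[of k]] by simp
    moreover have "nW (ys k) \<le> m + 1/(real k + 1)" by (rule vs(3))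
    moreover have "2 / (real k + 1) = 1/(real k + 1) + 1/(real k + 1)" by (simp add: field_simps)
    ultimately show ?thesis by simp
  qed
  then have gstm: "nW gst \<le> m" by (rule le_of_all)
  have "nW (?g us) \<le> nW gst" using mgK[OF usK] gstW Rst by blast
  then have part1: "\<exists>u\<in>K. nW (?g u) = m" using m_le[OF usK] gstm usK by (intro bexI[of _ us]) auto
  have part2: "?g u1 = ?g u2" if h: "u1 \<in> K" "u2 \<in> K" "nW (?g u1) = m" "nW (?g u2) = m" for u1 u2
  proof -
    have w: "(1/2) *\<^sub>R u1 + (1/2) *\<^sub>R u2 \<in> K" by (rule Kconv[OF h(1,2)]) auto
    have g1: "?g u1 \<in> W" "(u1, ?g u1) \<in> R" using mgK[OF h(1)] by auto
    have g2: "?g u2 \<in> W" "(u2, ?g u2) \<in> R" using mgK[OF h(2)] by auto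
    have r: "((1/2) *\<^sub>R u1 + (1/2) *\<^sub>R u2, (1/2) *\<^sub>R ?g u1 + (1/2) *\<^sub>R ?g u2) \<in> R"
      by (rule Rconv[OF gs g1(2) g2(2)]) auto
    have ww: "(1/2) *\<^sub>R ?g u1 + (1/2) *\<^sub>R ?g u2 \<in> W" using g1 g2 by (intro Va[OF nsW] Vs[OF nsW])
    have "m \<le> nW (?g ((1/2) *\<^sub>R u1 + (1/2) *\<^sub>R u2))" by (rule m_le[OF w])
    also have "\<dots> \<le> nW ((1/2) *\<^sub>R ?g u1 + (1/2) *\<^sub>R ?g u2)" using mgK[OF w] r ww by blast
    also have "(1/2) *\<^sub>R ?g u1 + (1/2) *\<^sub>R ?g u2 = (1/2) *\<^sub>R (?g u1 + ?g u2)" by (simp add: scaleR_add_right)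
    finally have "m \<le> nW ((1/2) *\<^sub>R (?g u1 + ?g u2))" .
    then show ?thesis by (rule strict_conv_eq[OF nsW gs_sc[OF gs] g1(1) g2(1) h(3,4)])
  qed
  have part3: "u1 = u2" if lin: "subspace K0" "\<forall>u\<in>Sob V W R. \<forall>v\<in>Sob V W R. ?g (u + v) = ?g u + ?g v"
      "\<forall>c. \<forall>u\<in>Sob V W R. ?g (c *\<^sub>R u) = c *\<^sub>R ?g u"
    and h: "u1 \<in> K" "u2 \<in> K" "nW (?g u1) = m" "nW (?g u2) = m" for u1 u2
  proof -
    have eqg: "?g u1 = ?g u2" by (rule part2[OF h])
    have s1: "u1 \<in> Sob V W R" "u2 \<in> Sob V W R" using h(1,2) unfolding Kiff by auto
    have u2V: "u2 \<in> V" "u1 \<in> V" using KV h(1,2) by auto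
    have g1: "?g u1 \<in> W" "(u1, ?g u1) \<in> R" using mgK[OF h(1)] by auto
    have g2: "?g u2 \<in> W" "(u2, ?g u2) \<in> R" using mgK[OF h(2)] by auto
    obtain g' where g': "g' \<in> W" "(- u2, g') \<in> R" using gs_GS3[OF gs u2V(1) g2] by blast
    have m2: "(-1) *\<^sub>R u2 \<in> Sob V W R" unfolding Sob_def using Vn[OF nsV u2V(1)] g' by auto
    have "(u1 + - u2, ?g u1 + g') \<in> R" by (rule gs_G1[OF gs g1(2) g'(2)])
    moreover have "u1 + - u2 \<in> V" using u2V by (intro Va[OF nsV] Vn[OF nsV])
    moreover have "?g u1 + g' \<in> W" using g1(1) g'(1) by (rule Va[OF nsW])
    ultimately have dS: "u1 - u2 \<in> Sob V W R" unfolding Sob_def by auto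
    have "?g (u1 + (-1) *\<^sub>R u2) = ?g u1 + ?g ((-1) *\<^sub>R u2)" using lin(2) s1(1) m2 by blast
    also have "?g ((-1) *\<^sub>R u2) = (-1) *\<^sub>R ?g u2" using lin(3) s1(2) by blast
    finally have "?g (u1 - u2) = 0" using eqg by simp
    moreover have "(u1 - u2, ?g (u1 - u2)) \<in> R" using min_grad_prop[OF gs dS] by blast
    ultimately have r0: "(u1 - u2, 0) \<in> R" by simp
    have "u1 - f \<in> K0" "u2 - f \<in> K0" using h(1,2) unfolding Kiff by auto
    then have "(u1 - f) - (u2 - f) \<in> K0" by (rule subspace_diff[OF lin(1)])
    then have dK0: "u1 - u2 \<in> K0" by simp
    have "nV (u1 - u2) \<le> Cp * nW 0" by (rule Cp(2)[OF dK0 subspace_0[OF ns_sub[OF nsW]] r0])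
    then have "nV (u1 - u2) \<le> 0" using ns_0[OF nsW] by simp
    moreover have "0 \<le> nV (u1 - u2)" by (rule ns_nonneg[OF nsV Vd[OF nsV u2V(2) u2V(1)]])
    ultimately have "nV (u1 - u2) = 0" by simp
    then have "u1 - u2 = 0" using ns_zero_iff[OF nsV Vd[OF nsV u2V(2) u2V(1)]] by simp
    then show ?thesis by simp
  qed
  have "(\<exists>u\<in>K. nW (?g u) = m) \<and> (\<forall>u1\<in>K. \<forall>u2\<in>K. nW (?g u1) = m \<and> nW (?g u2) = m \<longrightarrow> ?g u1 = ?g u2)
    \<and> (subspace K0 \<and> (\<forall>u\<in>Sob V W R. \<forall>v\<in>Sob V W R. ?g (u + v) = ?g u + ?g v) \<and>
       (\<forall>c. \<forall>u\<in>Sob V W R. ?g (c *\<^sub>R u) = c *\<^sub>R ?g u)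
       \<longrightarrow> (\<forall>u1\<in>K. \<forall>u2\<in>K. nW (?g u1) = m \<and> nW (?g u2) = m \<longrightarrow> u1 = u2))"
  proof (intro conjI ballI impI)
    show "\<exists>u\<in>K. nW (?g u) = m" by (rule part1)
  next
    fix u1 u2 assume "u1 \<in> K" "u2 \<in> K" "nW (?g u1) = m \<and> nW (?g u2) = m"
    then show "?g u1 = ?g u2" using part2 by blast
  next
    fix u1 u2 assume a: "subspace K0 \<and> (\<forall>u\<in>Sob V W R. \<forall>v\<in>Sob V W R. ?g (u + v) = ?g u + ?g v) \<and>
       (\<forall>c. \<forall>u\<in>Sob V W R. ?g (c *\<^sub>R u) = c *\<^sub>R ?g u)"
      and b: "u1 \<in> K" "u2 \<in> K" "nW (?g u1) = m \<and> nW (?g u2) = m"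
    show "u1 = u2" using part3[of u1 u2] a b by blast
  qed
  then show ?thesis unfolding m_def .
qed


end
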